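(* Let $n,d,t$ be integers with $2\le d\le n-2$ and $2\le t\le d$. Then $m_{G_{n,d,t}}[n-d+2,n]=n-d$ and $\mu_{n-d}(G_{n,d,t})=n-d+2$.
   Context: For a graph $G$ of order $n$, $\mu_1(G)\ge\dots\ge\mu_n(G)$ are the eigenvalues of the Laplacian matrix $L(G)=D(G)-A(G)$, and for an interval $I\subseteq[0,n]$, $m_G I$ is the number of Laplacian eigenvalues of $G$ (with multiplicity) in $I$. $G_{n,d,t}$ is the graph obtained from a path $v_1v_2\dots v_{d+1}$ and a vertex-disjoint complete graph $K_{n-d-1}$ by adding all edges between every vertex of $K_{n-d-1}$ and each of $v_{t-1},v_t,v_{t+1}$. *)

theory Defs
  imports "Jordan_Normal_Form.Char_Poly"
begin

text \<open>Simple graphs on vertex set {0..<n}, given by a symmetric irreflexive adjacency predicate.\<close>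

definition laplacian :: "nat \<Rightarrow> (nat \<Rightarrow> nat \<Rightarrow> bool) \<Rightarrow> real mat" where
  "laplacian n adj = mat n n (\<lambda>(i,j).
     if i = j then real (card {k. k < n \<and> adj i k})
     else if adj i j then -1 else 0)"

definition lap_eigs :: "nat \<Rightarrow> (nat \<Rightarrow> nat \<Rightarrow> bool) \<Rightarrow> real multiset" where
  "lap_eigs n adj = proots (char_poly (laplacian n adj))"

definition lap_count :: "nat \<Rightarrow> (nat \<Rightarrow> nat \<Rightarrow> bool) \<Rightarrow> real set \<Rightarrow> nat" where
  "lap_count n adj I = size (filter_mset (\<lambda>x. x \<in> I) (lap_eigs n adj))"

definition lap_mu :: "nat \<Rightarrow> (nat \<Rightarrow> nat \<Rightarrow> bool) \<Rightarrow> nat \<Rightarrow> real" where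
  "lap_mu n adj k = rev (sorted_list_of_multiset (lap_eigs n adj)) ! (k - 1)"

text \<open>G_{n,d,t}: path v_1..v_{d+1} is vertices 0..d (v_i = i-1); K_{n-d-1} is vertices d+1..n-1,
  each joined to v_{t-1}, v_t, v_{t+1}, i.e. vertices t-2, t-1, t.\<close>
definition G_ndt :: "nat \<Rightarrow> nat \<Rightarrow> nat \<Rightarrow> nat \<Rightarrow> nat \<Rightarrow> bool" where
  "G_ndt n d t i j \<longleftrightarrow> i < n \<and> j < n \<and> i \<noteq> j \<and>
     ((i \<le> d \<and> j \<le> d \<and> (i = j + 1 \<or> j = i + 1))
      \<or> (d < i \<and> d < j)
      \<or> (d < i \<and> j \<in> {t - 2, t - 1, t})
      \<or> (d < j \<and> i \<in> {t - 2, t - 1, t}))"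

end

theory Submission
  imports Defs "Jordan_Normal_Form.Jordan_Normal_Form_Uniqueness" "Jordan_Normal_Form.Jordan_Normal_Form_Existence"
begin


lemma sym_eigenvalue_real:
  fixes A :: "real mat" and a :: complex
  assumes A: "A \<in> carrier_mat n n"
    and sym: "\<And>i j. i < n \<Longrightarrow> j < n \<Longrightarrow> A $$ (i,j) = A $$ (j,i)"
    and ev: "eigenvalue (map_mat complex_of_real A) a"
  shows "a = complex_of_real (Re a)"
proof -
  let ?C = "map_mat complex_of_real A"
  from ev obtain v where v: "v \<in> carrier_vec n" "v \<noteq> 0\<^sub>v n" "?C *\<^sub>v v = a \<cdot>\<^sub>v v"
    unfolding eigenvalue_def eigenvector_def using A by auto
  define s where "s = (\<Sum>i<n. \<Sum>j<n. cnj (v$i) * complex_of_real (A$$(i,j)) * v$j)"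
  define N where "N = (\<Sum>i<n. cnj (v$i) * v$i)"
  have row: "\<And>i. i < n \<Longrightarrow> (\<Sum>j<n. complex_of_real (A$$(i,j)) * v$j) = a * v$i"
  proof -
    fix i assume i: "i < n"
    have "(?C *\<^sub>v v) $ i = a * v $ i" using v(3) i v(1) by simp
    moreover have "(?C *\<^sub>v v) $ i = (\<Sum>j<n. complex_of_real (A$$(i,j)) * v$j)"
      using i A v(1) by (auto simp: scalar_prod_def lessThan_atLeast0)
    ultimately show "(\<Sum>j<n. complex_of_real (A$$(i,j)) * v$j) = a * v$i" by simp
  qed
  have s1: "s = a * N"
  proof -
    have "s = (\<Sum>i<n. cnj (v$i) * (\<Sum>j<n. complex_of_real (A$$(i,j)) * v$j))"
      unfolding s_def by (simp add: sum_distrib_left mult.assoc)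
    also have "\<dots> = (\<Sum>i<n. a * (cnj (v$i) * v$i))" using row by (simp add: mult.commute mult.left_commute)
    finally show ?thesis unfolding N_def by (simp add: sum_distrib_left)
  qed
  have s2: "cnj s = s"
  proof -
    have "cnj s = (\<Sum>i<n. \<Sum>j<n. v$i * complex_of_real (A$$(i,j)) * cnj (v$j))"
      unfolding s_def by (simp add: cnj_sum)
    also have "\<dots> = (\<Sum>j<n. \<Sum>i<n. v$i * complex_of_real (A$$(i,j)) * cnj (v$j))"
      by (rule sum.swap)
    also have "\<dots> = s" unfolding s_def
      by (intro sum.cong refl, simp add: sym mult.commute mult.left_commute)
    finally show ?thesis .
  qed
  have Nreal: "N = complex_of_real (\<Sum>i<n. (cmod (v$i))^2)"
  proof -
    have "\<And>i. cnj (v$i) * v$i = complex_of_real ((cmod (v$i))^2)"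
      by (metis complex_norm_square mult.commute of_real_power)
    thus ?thesis unfolding N_def of_real_sum by simp
  qed
  have "\<exists>i<n. v$i \<noteq> 0"
  proof (rule ccontr)
    assume "\<not> ?thesis"
    hence "v = 0\<^sub>v n" using v(1) by (intro eq_vecI) auto
    with v(2) show False by simp
  qed
  then obtain i0 where i0: "i0 < n" "v$i0 \<noteq> 0" by auto
  have "(\<Sum>i<n. (cmod (v$i))^2) > 0"
  proof -
    have "(\<Sum>i<n. (cmod (v$i))^2) \<ge> (cmod (v$i0))^2"
      using i0 by (intro member_le_sum) auto
    moreover have "(cmod (v$i0))^2 > 0" using i0 by simp
    ultimately show ?thesis by linarith
  qed
  hence N0: "N \<noteq> 0" unfolding Nreal by (metis less_irrefl of_real_eq_0_iff)
  have "cnj N = N" unfolding Nreal by (rule complex_cnj_complex_of_real)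
  from s2 s1 have "cnj a * N = a * N" using \<open>cnj N = N\<close> by simp
  hence "cnj a = a" using N0 by simp
  hence "Im (cnj a) = Im a" by simp
  hence "Im a = 0" by simp
  thus ?thesis by (simp add: complex_eq_iff)
qed


lemma sym_char_poly_split:
  fixes A :: "real mat"
  assumes A: "A \<in> carrier_mat n n"
    and sym: "\<And>i j. i < n \<Longrightarrow> j < n \<Longrightarrow> A $$ (i,j) = A $$ (j,i)"
  shows "\<exists>es. char_poly A = (\<Prod>a\<leftarrow>es. [:-a,1:])"
proof -
  let ?C = "map_mat complex_of_real A"
  have C: "?C \<in> carrier_mat n n" using A by simp
  from char_poly_factorized[OF C] obtain as where cs: "char_poly ?C = (\<Prod>a\<leftarrow>as. [:-a,1:])" by auto
  have hom: "char_poly ?C = map_poly complex_of_real (char_poly A)"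
    by (rule of_real_hom.char_poly_hom[OF A])
  have real: "\<forall>a\<in>set as. a = complex_of_real (Re a)"
  proof
    fix a assume "a \<in> set as"
    hence "poly (char_poly ?C) a = 0" unfolding cs by (rule linear_poly_root)
    hence "eigenvalue ?C a" using eigenvalue_root_char_poly[OF C] by simp
    thus "a = complex_of_real (Re a)" using sym_eigenvalue_real[OF A sym] by blast
  qed
  interpret mp: map_poly_inj_idom_hom complex_of_real ..
  have "map_poly complex_of_real (\<Prod>a\<leftarrow>map Re as. [:-a,1:]) = (\<Prod>a\<leftarrow>as. [:-a,1:])"
    using real by (induct as) (auto simp: hom_distribs)
  hence "map_poly complex_of_real (char_poly A) = map_poly complex_of_real (\<Prod>a\<leftarrow>map Re as. [:-a,1:])"
    using cs hom by simp
  hence "char_poly A = (\<Prod>a\<leftarrow>map Re as. [:-a,1:])" by (rule mp.injectivity)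
  thus ?thesis by blast
qed


lemma sym_sq_kernel:
  fixes M :: "real mat"
  assumes M: "M \<in> carrier_mat n n"
    and sym: "\<And>i j. i < n \<Longrightarrow> j < n \<Longrightarrow> M $$ (i,j) = M $$ (j,i)"
    and v: "v \<in> carrier_vec n" and z: "M *\<^sub>v (M *\<^sub>v v) = 0\<^sub>v n"
  shows "M *\<^sub>v v = 0\<^sub>v n"
proof -
  define y where "y = M *\<^sub>v v"
  have y: "y \<in> carrier_vec n" unfolding y_def using M v by simp
  have yi: "\<And>i. i < n \<Longrightarrow> y $ i = (\<Sum>k<n. M$$(i,k) * v$k)"
    unfolding y_def using M v by (auto simp: scalar_prod_def lessThan_atLeast0)
  have zi: "\<And>i. i < n \<Longrightarrow> (\<Sum>k<n. M$$(i,k) * y$k) = 0"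
  proof -
    fix i assume i: "i < n"
    have "(M *\<^sub>v y) $ i = 0" using z i unfolding y_def by simp
    thus "(\<Sum>k<n. M$$(i,k) * y$k) = 0" using M y i by (auto simp: scalar_prod_def lessThan_atLeast0)
  qed
  have "(\<Sum>i<n. y$i * y$i) = (\<Sum>i<n. y$i * (\<Sum>k<n. M$$(i,k) * v$k))" using yi by simp
  also have "\<dots> = (\<Sum>i<n. \<Sum>k<n. y$i * M$$(i,k) * v$k)" by (simp add: sum_distrib_left mult.assoc)
  also have "\<dots> = (\<Sum>k<n. \<Sum>i<n. y$i * M$$(i,k) * v$k)" by (rule sum.swap)
  also have "\<dots> = (\<Sum>k<n. v$k * (\<Sum>i<n. M$$(k,i) * y$i))"
    by (intro sum.cong refl) (simp add: sum_distrib_left sym mult.commute mult.left_commute)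
  also have "\<dots> = 0" using zi by simp
  finally have ss: "(\<Sum>i<n. y$i * y$i) = 0" .
  have "\<forall>i\<in>{..<n}. y$i * y$i = 0"
    using ss by (subst (asm) sum_nonneg_eq_0_iff) auto
  hence "y = 0\<^sub>v n" using y by (intro eq_vecI) auto
  thus ?thesis unfolding y_def .
qed

lemma kernel_dim_cong:
  assumes "mat_kernel A = mat_kernel B" "dim_col A = dim_col B"
  shows "kernel_dim A = kernel_dim B"
  unfolding kernel_dim_def using assms by (simp only:)

lemma sym_jordan_blocks_1:
  fixes A :: "real mat"
  assumes A: "A \<in> carrier_mat n n"
    and sym: "\<And>i j. i < n \<Longrightarrow> j < n \<Longrightarrow> A $$ (i,j) = A $$ (j,i)"
    and jnf: "jordan_nf A n_as"
  shows "\<forall>x\<in>set n_as. fst x = 1"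
proof
  fix x assume x: "x \<in> set n_as"
  obtain k ev where xe: "x = (k, ev)" by force
  let ?M = "char_matrix A ev"
  have M: "?M \<in> carrier_mat n n" using A by simp
  have symM: "\<And>i j. i < n \<Longrightarrow> j < n \<Longrightarrow> ?M $$ (i,j) = ?M $$ (j,i)"
    using A sym by (auto simp: char_matrix_def)
  have pow2: "?M ^\<^sub>m 2 = ?M * ?M" using M by (simp add: numeral_2_eq_2)
  have pow1: "?M ^\<^sub>m 1 = ?M" using M by simp
  have ker: "mat_kernel (?M ^\<^sub>m 2) = mat_kernel (?M ^\<^sub>m 1)"
  proof
    show "mat_kernel (?M ^\<^sub>m 2) \<subseteq> mat_kernel (?M ^\<^sub>m 1)"
    proof
      fix v assume "v \<in> mat_kernel (?M ^\<^sub>m 2)"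
      hence v: "v \<in> carrier_vec n" "(?M * ?M) *\<^sub>v v = 0\<^sub>v n"
        unfolding pow2 mat_kernel_def using M by auto
      have "?M *\<^sub>v (?M *\<^sub>v v) = 0\<^sub>v n" using assoc_mult_mat_vec[OF M M v(1)] v(2) by simp
      from sym_sq_kernel[OF M symM v(1) this]
      show "v \<in> mat_kernel (?M ^\<^sub>m 1)" unfolding pow1 mat_kernel_def using v M by auto
    qed
  next
    show "mat_kernel (?M ^\<^sub>m 1) \<subseteq> mat_kernel (?M ^\<^sub>m 2)"
    proof
      fix v assume "v \<in> mat_kernel (?M ^\<^sub>m 1)"
      hence v: "v \<in> carrier_vec n" "?M *\<^sub>v v = 0\<^sub>v n"
        unfolding pow1 mat_kernel_def using M by auto
      have z0: "?M *\<^sub>v 0\<^sub>v n = 0\<^sub>v n" using M by (intro eq_vecI) (auto simp: scalar_prod_def)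
      have "(?M * ?M) *\<^sub>v v = 0\<^sub>v n" using assoc_mult_mat_vec[OF M M v(1)] v(2) z0 by simp
      thus "v \<in> mat_kernel (?M ^\<^sub>m 2)" unfolding pow2 mat_kernel_def using v M by auto
    qed
  qed
  have "dim_gen_eigenspace A ev 2 = dim_gen_eigenspace A ev 1"
    unfolding dim_gen_eigenspace_def
    by (rule kernel_dim_cong[OF ker], insert M, simp add: pow2)
  define ks where "ks = map fst [(k, e)\<leftarrow>n_as . e = ev]"
  hence eq: "(\<Sum>k\<leftarrow>ks. min 2 k) = (\<Sum>k\<leftarrow>ks. min 1 k)"
    using dim_gen_eigenspace[OF jnf, of ev] \<open>dim_gen_eigenspace A ev 2 = dim_gen_eigenspace A ev 1\<close> by simp
  have split: "\<And>xs::nat list. (\<Sum>k\<leftarrow>xs. min 2 k) = (\<Sum>k\<leftarrow>xs. min 1 k) + (\<Sum>k\<leftarrow>xs. min 2 k - min 1 k)"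
  proof -
    fix xs :: "nat list"
    show "(\<Sum>k\<leftarrow>xs. min 2 k) = (\<Sum>k\<leftarrow>xs. min 1 k) + (\<Sum>k\<leftarrow>xs. min 2 k - min 1 k)"
      by (induct xs) auto
  qed
  have s0: "(\<Sum>k\<leftarrow>ks. min 2 k - min 1 k) = 0" using eq split[of ks] by linarith
  have kin: "k \<in> set ks" unfolding ks_def using x xe by (auto intro!: image_eqI[of _ fst "(k,ev)"])
  have "min 2 k - min 1 k \<in> set (map (\<lambda>k. min 2 k - min 1 k) ks)" using kin by simp
  hence "min 2 k - min 1 k = (0::nat)" using s0 sum_list_eq_0_iff by blast
  hence "k \<le> 1" by simp
  moreover have "k \<noteq> 0" using jnf x xe unfolding jordan_nf_def by force
  ultimately show "fst x = 1" using xe by simp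
qed


lemma jordan_matrix_diag:
  assumes "\<forall>x\<in>set n_as. fst x = 1"
  shows "jordan_matrix n_as = mat (length n_as) (length n_as) (\<lambda>(i,j). if i = j then snd (n_as ! i) else 0)"
  using assms
proof (induct n_as)
  case Nil
  show ?case unfolding jordan_matrix_def by (intro eq_matI) auto
next
  case (Cons x rest)
  obtain a where x: "x = (1, a)" using Cons(2) by (cases x) auto
  have IH: "jordan_matrix rest = mat (length rest) (length rest) (\<lambda>(i,j). if i = j then snd (rest ! i) else 0)"
    using Cons by auto
  have JM: "jordan_matrix (x # rest) = four_block_mat (jordan_block 1 a) (0\<^sub>m 1 (length rest)) (0\<^sub>m (length rest) 1) (jordan_matrix rest)"
    unfolding x jordan_matrix_def using IH unfolding jordan_matrix_def by (simp add: Let_def)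
  show ?case unfolding JM IH
    by (intro eq_matI) (auto simp: jordan_block_def nth_Cons' x)
qed


lemma prod_list_map_nth: "prod_list (map f xs) = (\<Prod>j<length xs. f (xs!j))"
  by (induct xs) (simp_all del: prod.lessThan_Suc add: prod.lessThan_Suc_shift)

lemma sym_spectral:
  fixes A :: "real mat"
  assumes A: "A \<in> carrier_mat n n"
    and sym: "\<And>i j. i < n \<Longrightarrow> j < n \<Longrightarrow> A $$ (i,j) = A $$ (j,i)"
  shows "\<exists>P d. (\<forall>i<n. \<forall>j<n. (\<Sum>k<n. A$$(i,k) * P$$(k,j)) = d j * P$$(i,j))
     \<and> (\<forall>\<gamma>. (\<forall>i<n. (\<Sum>j<n. \<gamma> j * P$$(i,j)) = 0) \<longrightarrow> (\<forall>j<n. \<gamma> j = 0))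
     \<and> char_poly A = (\<Prod>j<n. [:- d j, 1:])"
proof -
  obtain es where es: "char_poly A = (\<Prod>a\<leftarrow>es. [:-a,1:])" using sym_char_poly_split[OF A sym] by blast
  obtain n_as where jnf: "jordan_nf A n_as" using jordan_nf_exists[OF A es] by blast
  have ones: "\<forall>x\<in>set n_as. fst x = 1" by (rule sym_jordan_blocks_1[OF A sym jnf])
  define d where "d = (\<lambda>j. snd (n_as ! j))"
  define D where "D = jordan_matrix n_as"
  have Dm: "D = mat (length n_as) (length n_as) (\<lambda>(i,j). if i = j then d i else 0)"
    unfolding D_def d_def by (rule jordan_matrix_diag[OF ones])
  from jnf have "similar_mat A D" unfolding jordan_nf_def D_def by simp
  then obtain P Q where wit: "similar_mat_wit A D P Q" unfolding similar_mat_def by blast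
  have dr: "dim_row A = n" using A by simp
  note w = similar_mat_witD[OF dr[symmetric] wit]
  have L: "length n_as = n" using w(5) Dm by auto
  have D: "D \<in> carrier_mat n n" and P: "P \<in> carrier_mat n n" and Q: "Q \<in> carrier_mat n n"
    using w by auto
  have AP: "A * P = P * D"
  proof -
    have "A * P = P * D * Q * P" using w(3) by simp
    also have "\<dots> = P * D * (Q * P)" using P D Q by (simp add: assoc_mult_mat[of _ n n _ n _ n])
    also have "\<dots> = P * D" using w(2) P D by simp
    finally show ?thesis .
  qed
  have eig: "\<forall>i<n. \<forall>j<n. (\<Sum>k<n. A$$(i,k) * P$$(k,j)) = d j * P$$(i,j)"
  proof (intro allI impI)
    fix i j assume i: "i < n" and j: "j < n"
    have "(A * P) $$ (i,j) = (\<Sum>k<n. A$$(i,k) * P$$(k,j))"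
      using A P i j by (simp add: scalar_prod_def lessThan_atLeast0)
    moreover have "(P * D) $$ (i,j) = (\<Sum>k<n. P$$(i,k) * D$$(k,j))"
      using D P i j by (simp add: scalar_prod_def lessThan_atLeast0)
    moreover have "(\<Sum>k<n. P$$(i,k) * D$$(k,j)) = (\<Sum>k<n. if k = j then P$$(i,j) * d j else 0)"
      using j L by (intro sum.cong refl) (auto simp: Dm)
    moreover have "\<dots> = P$$(i,j) * d j" using j by simp
    ultimately show "(\<Sum>k<n. A$$(i,k) * P$$(k,j)) = d j * P$$(i,j)" using AP by (simp add: mult.commute)
  qed
  have ind: "\<forall>\<gamma>. (\<forall>i<n. (\<Sum>j<n. \<gamma> j * P$$(i,j)) = 0) \<longrightarrow> (\<forall>j<n. \<gamma> j = 0)"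
  proof (intro allI impI)
    fix \<gamma> :: "nat \<Rightarrow> real" and l assume h: "\<forall>i<n. (\<Sum>j<n. \<gamma> j * P$$(i,j)) = 0" and l: "l < n"
    have QP: "\<And>j. j < n \<Longrightarrow> (\<Sum>i<n. Q$$(l,i) * P$$(i,j)) = (if l = j then 1 else 0)"
    proof -
      fix j assume j: "j < n"
      have "(Q * P) $$ (l,j) = (\<Sum>i<n. Q$$(l,i) * P$$(i,j))"
        using Q P l j by (simp add: scalar_prod_def lessThan_atLeast0)
      thus "(\<Sum>i<n. Q$$(l,i) * P$$(i,j)) = (if l = j then 1 else 0)" using w(2) l j by simp
    qed
    have "(\<Sum>j<n. \<gamma> j * (if l = j then 1 else 0)) = (\<Sum>j<n. if l = j then \<gamma> j else 0)"
      by (intro sum.cong) auto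
    hence "\<gamma> l = (\<Sum>j<n. \<gamma> j * (if l = j then 1 else 0))" using l by simp
    also have "\<dots> = (\<Sum>j<n. \<gamma> j * (\<Sum>i<n. Q$$(l,i) * P$$(i,j)))" using QP by simp
    also have "\<dots> = (\<Sum>j<n. \<Sum>i<n. Q$$(l,i) * (\<gamma> j * P$$(i,j)))"
      by (simp add: sum_distrib_left mult.commute mult.left_commute)
    also have "\<dots> = (\<Sum>i<n. \<Sum>j<n. Q$$(l,i) * (\<gamma> j * P$$(i,j)))" by (rule sum.swap)
    also have "\<dots> = (\<Sum>i<n. Q$$(l,i) * (\<Sum>j<n. \<gamma> j * P$$(i,j)))" by (simp add: sum_distrib_left)
    also have "\<dots> = 0" using h by simp
    finally show "\<gamma> l = 0" .
  qed
  have cp: "char_poly A = (\<Prod>j<n. [:- d j, 1:])"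
  proof -
    have "char_poly A = char_poly D" by (rule char_poly_similar) (simp add: \<open>similar_mat A D\<close>)
    also have "\<dots> = (\<Prod>(k, a)\<leftarrow>n_as. [:- a, 1:] ^ k)" unfolding D_def by (rule jordan_matrix_char_poly)
    also have "\<dots> = (\<Prod>x\<leftarrow>n_as. [:- snd x, 1:])"
      using ones by (intro arg_cong[where f = prod_list] map_cong) auto
    also have "\<dots> = (\<Prod>j<length n_as. [:- d j, 1:])" unfolding d_def
      by (simp add: prod_list_map_nth)
    finally show ?thesis using L by simp
  qed
  show ?thesis using eig ind cp by blast
qed


lemma dep_exists:
  fixes v :: "'j \<Rightarrow> nat \<Rightarrow> real"
  assumes "finite J" "card J > n"
  shows "\<exists>\<gamma>. (\<exists>j\<in>J. \<gamma> j \<noteq> 0) \<and> (\<forall>i<n. (\<Sum>j\<in>J. \<gamma> j * v j i) = 0)"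
  using assms
proof (induct n arbitrary: J v)
  case 0
  then obtain j0 where "j0 \<in> J" by (metis card.empty ex_in_conv less_irrefl)
  thus ?case by (intro exI[of _ "\<lambda>_. 1"]) auto
next
  case (Suc n)
  show ?case
  proof (cases "\<forall>j\<in>J. v j n = 0")
    case True
    from Suc(1)[OF Suc(2)] Suc(3) obtain \<gamma> where g: "\<exists>j\<in>J. \<gamma> j \<noteq> 0" "\<forall>i<n. (\<Sum>j\<in>J. \<gamma> j * v j i) = 0"
      by (metis Suc_lessD)
    have "\<forall>i<Suc n. (\<Sum>j\<in>J. \<gamma> j * v j i) = 0"
      using g(2) True by (auto simp: less_Suc_eq)
    thus ?thesis using g(1) by blast
  next
    case False
    then obtain j0 where j0: "j0 \<in> J" "v j0 n \<noteq> 0" by auto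
    define J' where "J' = J - {j0}"
    have fin: "finite J'" using Suc(2) unfolding J'_def by simp
    have cJ: "card J' > n" using Suc(3) j0 Suc(2) unfolding J'_def by simp
    define w where "w = (\<lambda>j i. v j i - (v j n / v j0 n) * v j0 i)"
    from Suc(1)[OF fin cJ, of w] obtain \<gamma> where
      g: "\<exists>j\<in>J'. \<gamma> j \<noteq> 0" "\<forall>i<n. (\<Sum>j\<in>J'. \<gamma> j * w j i) = 0" by blast
    define \<gamma>' where "\<gamma>' = (\<lambda>j. if j = j0 then - (\<Sum>j\<in>J'. \<gamma> j * v j n) / v j0 n else \<gamma> j)"
    have key: "\<And>i. (\<Sum>j\<in>J. \<gamma>' j * v j i) = (\<Sum>j\<in>J'. \<gamma> j * w j i)"
    proof -
      fix i
      have "(\<Sum>j\<in>J. \<gamma>' j * v j i) = \<gamma>' j0 * v j0 i + (\<Sum>j\<in>J'. \<gamma>' j * v j i)"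
        unfolding J'_def using j0 Suc(2) by (simp add: sum.remove)
      also have "(\<Sum>j\<in>J'. \<gamma>' j * v j i) = (\<Sum>j\<in>J'. \<gamma> j * v j i)"
        unfolding \<gamma>'_def J'_def by (intro sum.cong) auto
      also have "(\<Sum>j\<in>J'. \<gamma> j * w j i) = (\<Sum>j\<in>J'. \<gamma> j * v j i) - (\<Sum>j\<in>J'. \<gamma> j * v j n) / v j0 n * v j0 i"
        unfolding w_def by (simp add: right_diff_distrib sum_subtractf sum_distrib_right sum_divide_distrib mult.assoc)
      moreover have "\<gamma>' j0 * v j0 i = - (\<Sum>j\<in>J'. \<gamma> j * v j n) / v j0 n * v j0 i"
        unfolding \<gamma>'_def by simp
      ultimately show "(\<Sum>j\<in>J. \<gamma>' j * v j i) = (\<Sum>j\<in>J'. \<gamma> j * w j i)" by simp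
    qed
    have "\<forall>i<Suc n. (\<Sum>j\<in>J. \<gamma>' j * v j i) = 0"
    proof (intro allI impI)
      fix i assume i: "i < Suc n"
      show "(\<Sum>j\<in>J. \<gamma>' j * v j i) = 0"
      proof (cases "i < n")
        case True thus ?thesis using key g(2) by simp
      next
        case False
        hence "i = n" using i by simp
        have "\<And>j. w j n = 0" unfolding w_def using j0(2) by simp
        thus ?thesis using key \<open>i = n\<close> by simp
      qed
    qed
    moreover have "\<exists>j\<in>J. \<gamma>' j \<noteq> 0"
    proof -
      obtain j where j: "j \<in> J'" "\<gamma> j \<noteq> 0" using g(1) by blast
      hence "j \<in> J" "j \<noteq> j0" unfolding J'_def by auto
      hence "\<gamma>' j \<noteq> 0" using j(2) unfolding \<gamma>'_def by simp
      thus ?thesis using \<open>j \<in> J\<close> by blast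
    qed
    ultimately show ?thesis by blast
  qed
qed


definition ip :: "nat \<Rightarrow> (nat \<Rightarrow> real) \<Rightarrow> (nat \<Rightarrow> real) \<Rightarrow> real" where
  "ip n x y = (\<Sum>i<n. x i * y i)"

definition qf :: "nat \<Rightarrow> (nat \<Rightarrow> nat \<Rightarrow> real) \<Rightarrow> (nat \<Rightarrow> real) \<Rightarrow> real" where
  "qf n a x = (\<Sum>i<n. x i * (\<Sum>k<n. a i k * x k))"

lemma bilin:
  fixes x :: "'j \<Rightarrow> nat \<Rightarrow> real"
  shows "ip n (\<lambda>i. \<Sum>j\<in>S. \<alpha> j * x j i) (\<lambda>i. \<Sum>l\<in>T. \<beta> l * x l i)
    = (\<Sum>j\<in>S. \<Sum>l\<in>T. \<alpha> j * \<beta> l * ip n (x j) (x l))"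
proof -
  have "ip n (\<lambda>i. \<Sum>j\<in>S. \<alpha> j * x j i) (\<lambda>i. \<Sum>l\<in>T. \<beta> l * x l i)
     = (\<Sum>i<n. \<Sum>j\<in>S. \<Sum>l\<in>T. \<alpha> j * \<beta> l * (x j i * x l i))"
    unfolding ip_def by (simp add: sum_product mult_ac)
  also have "\<dots> = (\<Sum>j\<in>S. \<Sum>i<n. \<Sum>l\<in>T. \<alpha> j * \<beta> l * (x j i * x l i))" by (rule sum.swap)
  also have "\<dots> = (\<Sum>j\<in>S. \<Sum>l\<in>T. \<Sum>i<n. \<alpha> j * \<beta> l * (x j i * x l i))" by (simp add: sum.swap[of _ "{..<n}"])
  also have "\<dots> = (\<Sum>j\<in>S. \<Sum>l\<in>T. \<alpha> j * \<beta> l * ip n (x j) (x l))"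
    unfolding ip_def by (simp add: sum_distrib_left)
  finally show ?thesis .
qed

lemma ip_self_pos:
  assumes "i0 < n" "x i0 \<noteq> 0"
  shows "ip n x x > 0"
proof -
  have "ip n x x = (\<Sum>i<n. (x i)^2)" unfolding ip_def by (simp add: power2_eq_square)
  also have "\<dots> \<ge> (x i0)^2" using assms by (intro member_le_sum) auto
  finally show ?thesis using assms by (smt (verit) zero_less_power2)
qed

lemma ip_self_nonneg: "ip n x x \<ge> 0"
  unfolding ip_def by (intro sum_nonneg) simp

locale symeig =
  fixes n :: nat and a :: "nat \<Rightarrow> nat \<Rightarrow> real" and p :: "nat \<Rightarrow> nat \<Rightarrow> real" and d :: "nat \<Rightarrow> real"
  assumes sym: "\<And>i j. i < n \<Longrightarrow> j < n \<Longrightarrow> a i j = a j i"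
    and eig: "\<And>j i. j < n \<Longrightarrow> i < n \<Longrightarrow> (\<Sum>k<n. a i k * p j k) = d j * p j i"
    and indep: "\<And>\<gamma> j. (\<And>i. i < n \<Longrightarrow> (\<Sum>j<n. \<gamma> j * p j i) = 0) \<Longrightarrow> j < n \<Longrightarrow> \<gamma> j = 0"
begin

lemma orth:
  assumes j: "j < n" and l: "l < n" and ne: "d j \<noteq> d l"
  shows "ip n (p j) (p l) = 0"
proof -
  have "d l * ip n (p j) (p l) = (\<Sum>i<n. p j i * (\<Sum>k<n. a i k * p l k))"
    unfolding ip_def using eig[OF l] by (simp add: sum_distrib_left mult_ac)
  also have "\<dots> = (\<Sum>i<n. \<Sum>k<n. p j i * a i k * p l k)" by (simp add: sum_distrib_left mult_ac)
  also have "\<dots> = (\<Sum>k<n. \<Sum>i<n. p j i * a i k * p l k)" by (rule sum.swap)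
  also have "\<dots> = (\<Sum>k<n. p l k * (\<Sum>i<n. a k i * p j i))"
    by (intro sum.cong refl) (simp add: sum_distrib_left sym mult_ac)
  also have "\<dots> = d j * ip n (p j) (p l)"
    unfolding ip_def using eig[OF j] by (simp add: sum_distrib_left mult_ac)
  finally have "(d l - d j) * ip n (p j) (p l) = 0" by (simp add: left_diff_distrib)
  thus ?thesis using ne by simp
qed

lemma qf_comb:
  assumes S: "S \<subseteq> {..<n}"
  shows "qf n a (\<lambda>i. \<Sum>j\<in>S. \<gamma> j * p j i) = (\<Sum>j\<in>S. \<Sum>l\<in>S. \<gamma> j * (\<gamma> l * d l) * ip n (p j) (p l))"
proof -
  have Aw: "\<And>i. i < n \<Longrightarrow> (\<Sum>k<n. a i k * (\<Sum>j\<in>S. \<gamma> j * p j k)) = (\<Sum>l\<in>S. (\<gamma> l * d l) * p l i)"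
  proof -
    fix i assume i: "i < n"
    have "(\<Sum>k<n. a i k * (\<Sum>j\<in>S. \<gamma> j * p j k)) = (\<Sum>k<n. \<Sum>j\<in>S. \<gamma> j * (a i k * p j k))"
      by (simp add: sum_distrib_left mult_ac)
    also have "\<dots> = (\<Sum>j\<in>S. \<gamma> j * (\<Sum>k<n. a i k * p j k))" by (simp add: sum.swap[of _ "{..<n}"] sum_distrib_left)
    also have "\<dots> = (\<Sum>l\<in>S. (\<gamma> l * d l) * p l i)" using S i eig by (intro sum.cong) (auto simp: mult_ac)
    finally show "(\<Sum>k<n. a i k * (\<Sum>j\<in>S. \<gamma> j * p j k)) = (\<Sum>l\<in>S. (\<gamma> l * d l) * p l i)" .
  qed
  have "qf n a (\<lambda>i. \<Sum>j\<in>S. \<gamma> j * p j i) = ip n (\<lambda>i. \<Sum>j\<in>S. \<gamma> j * p j i) (\<lambda>i. \<Sum>l\<in>S. (\<gamma> l * d l) * p l i)"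
    unfolding qf_def ip_def using Aw by simp
  also have "\<dots> = (\<Sum>j\<in>S. \<Sum>l\<in>S. \<gamma> j * (\<gamma> l * d l) * ip n (p j) (p l))" by (rule bilin)
  finally show ?thesis .
qed

lemma sq_comb:
  assumes S: "S \<subseteq> {..<n}" and g: "\<And>j. j \<in> S \<Longrightarrow> g (d j) \<ge> 0"
  shows "ip n (\<lambda>i. \<Sum>j\<in>S. (sqrt (g (d j)) * \<gamma> j) * p j i) (\<lambda>i. \<Sum>j\<in>S. (sqrt (g (d j)) * \<gamma> j) * p j i)
     = (\<Sum>j\<in>S. \<Sum>l\<in>S. \<gamma> j * (\<gamma> l * g (d l)) * ip n (p j) (p l))"
proof -
  have "ip n (\<lambda>i. \<Sum>j\<in>S. (sqrt (g (d j)) * \<gamma> j) * p j i) (\<lambda>i. \<Sum>j\<in>S. (sqrt (g (d j)) * \<gamma> j) * p j i)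
    = (\<Sum>j\<in>S. \<Sum>l\<in>S. (sqrt (g (d j)) * \<gamma> j) * (sqrt (g (d l)) * \<gamma> l) * ip n (p j) (p l))"
    by (rule bilin)
  also have "\<dots> = (\<Sum>j\<in>S. \<Sum>l\<in>S. \<gamma> j * (\<gamma> l * g (d l)) * ip n (p j) (p l))"
  proof (intro sum.cong refl)
    fix j l assume j: "j \<in> S" and l: "l \<in> S"
    show "(sqrt (g (d j)) * \<gamma> j) * (sqrt (g (d l)) * \<gamma> l) * ip n (p j) (p l) = \<gamma> j * (\<gamma> l * g (d l)) * ip n (p j) (p l)"
    proof (cases "d j = d l")
      case True
      have "sqrt (g (d j)) * sqrt (g (d l)) = g (d l)" using True g[OF l] by simp
      thus ?thesis by (metis (no_types, lifting) mult.assoc mult.left_commute)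
    next
      case False
      thus ?thesis using orth j l S by auto
    qed
  qed
  finally show ?thesis .
qed

lemma ip_comb:
  "ip n (\<lambda>i. \<Sum>j\<in>S. \<gamma> j * p j i) (\<lambda>i. \<Sum>j\<in>S. \<gamma> j * p j i) = (\<Sum>j\<in>S. \<Sum>l\<in>S. \<gamma> j * \<gamma> l * ip n (p j) (p l))"
  by (rule bilin)

lemma comb_nonzero:
  assumes S: "S \<subseteq> {..<n}" and j0: "j0 \<in> S" "c j0 \<noteq> 0"
  shows "\<exists>i<n. (\<Sum>j\<in>S. c j * p j i) \<noteq> 0"
proof (rule ccontr)
  assume "\<not> ?thesis"
  hence z: "\<And>i. i < n \<Longrightarrow> (\<Sum>j\<in>S. c j * p j i) = 0" by auto
  define c' where "c' = (\<lambda>j. if j \<in> S then c j else 0)"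
  have "\<And>i. i < n \<Longrightarrow> (\<Sum>j<n. c' j * p j i) = 0"
  proof -
    fix i assume i: "i < n"
    have "(\<Sum>j<n. c' j * p j i) = (\<Sum>j\<in>S. c j * p j i)"
      unfolding c'_def using S by (intro sum.mono_neutral_cong_right) auto
    thus "(\<Sum>j<n. c' j * p j i) = 0" using z i by simp
  qed
  from indep[OF this, of j0] j0 S have "c' j0 = 0" by auto
  thus False using j0 unfolding c'_def by simp
qed

lemma eig_side_le:
  fixes \<gamma> :: "nat \<Rightarrow> real"
  assumes S: "S \<subseteq> {..<n}" and c: "\<And>j. j \<in> S \<Longrightarrow> d j \<le> c"
  defines "w \<equiv> (\<lambda>i. \<Sum>j\<in>S. \<gamma> j * p j i)"
  shows "c * ip n w w - qf n a w = ip n (\<lambda>i. \<Sum>j\<in>S. (sqrt ((\<lambda>x. c - x) (d j)) * \<gamma> j) * p j i) (\<lambda>i. \<Sum>j\<in>S. (sqrt ((\<lambda>x. c - x) (d j)) * \<gamma> j) * p j i)"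
proof -
  have "c * ip n w w - qf n a w = (\<Sum>j\<in>S. \<Sum>l\<in>S. \<gamma> j * (\<gamma> l * (c - d l)) * ip n (p j) (p l))"
    unfolding w_def ip_comb qf_comb[OF S]
    by (simp add: sum_distrib_left sum_subtractf[symmetric] algebra_simps)
  also have "\<dots> = ip n (\<lambda>i. \<Sum>j\<in>S. (sqrt ((\<lambda>x. c - x) (d j)) * \<gamma> j) * p j i) (\<lambda>i. \<Sum>j\<in>S. (sqrt ((\<lambda>x. c - x) (d j)) * \<gamma> j) * p j i)"
    by (rule sq_comb[OF S, of "\<lambda>x. c - x", symmetric]) (use c in auto)
  finally show ?thesis .
qed

lemma eig_side_ge:
  fixes \<gamma> :: "nat \<Rightarrow> real"
  assumes S: "S \<subseteq> {..<n}" and c: "\<And>j. j \<in> S \<Longrightarrow> d j \<ge> c"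
  defines "w \<equiv> (\<lambda>i. \<Sum>j\<in>S. \<gamma> j * p j i)"
  shows "qf n a w - c * ip n w w = ip n (\<lambda>i. \<Sum>j\<in>S. (sqrt ((\<lambda>x. x - c) (d j)) * \<gamma> j) * p j i) (\<lambda>i. \<Sum>j\<in>S. (sqrt ((\<lambda>x. x - c) (d j)) * \<gamma> j) * p j i)"
proof -
  have "qf n a w - c * ip n w w = (\<Sum>j\<in>S. \<Sum>l\<in>S. \<gamma> j * (\<gamma> l * (d l - c)) * ip n (p j) (p l))"
    unfolding w_def ip_comb qf_comb[OF S]
    by (simp add: sum_distrib_left sum_subtractf[symmetric] algebra_simps)
  also have "\<dots> = ip n (\<lambda>i. \<Sum>j\<in>S. (sqrt ((\<lambda>x. x - c) (d j)) * \<gamma> j) * p j i) (\<lambda>i. \<Sum>j\<in>S. (sqrt ((\<lambda>x. x - c) (d j)) * \<gamma> j) * p j i)"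
    by (rule sq_comb[OF S, of "\<lambda>x. x - c", symmetric]) (use c in auto)
  finally show ?thesis .
qed


end

context symeig
begin
lemma qf_cong:
  assumes xy: "\<And>i. i < n \<Longrightarrow> x i = y i"
  shows "qf n a x = qf n a y"
proof -
  have "\<And>i. i < n \<Longrightarrow> (\<Sum>k<n. a i k * x k) = (\<Sum>k<n. a i k * y k)" using xy by (intro sum.cong) auto
  thus ?thesis unfolding qf_def using xy by (intro sum.cong) auto
qed

lemma ip_cong: "(\<And>i. i < n \<Longrightarrow> x i = y i) \<Longrightarrow> ip n x x = ip n y y"
  unfolding ip_def by (intro sum.cong refl) simp

lemma two_fam:
  fixes v :: "'i \<Rightarrow> nat \<Rightarrow> real"
  assumes I: "finite I"
    and vind: "\<And>\<alpha>. (\<And>i. i < n \<Longrightarrow> (\<Sum>j\<in>I. \<alpha> j * v j i) = 0) \<Longrightarrow> \<forall>j\<in>I. \<alpha> j = 0"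
    and S: "S \<subseteq> {..<n}" and card: "card I + card S > n"
  shows "\<exists>\<alpha> \<beta>. (\<exists>j\<in>I. \<alpha> j \<noteq> 0) \<and> (\<exists>j\<in>S. \<beta> j \<noteq> 0) \<and>
     (\<forall>i<n. (\<Sum>j\<in>I. \<alpha> j * v j i) = (\<Sum>j\<in>S. \<beta> j * p j i))"
proof -
  have finS: "finite S" using S finite_subset by blast
  define V where "V = (\<lambda>x i. case x of Inl j \<Rightarrow> v j i | Inr j \<Rightarrow> p j i)"
  have cJ: "card (I <+> S) > n" using card I finS by (simp add: card_Plus)
  from dep_exists[OF finite_Plus[OF I finS] cJ, of V] obtain \<gamma> where
    g: "\<exists>x\<in>I <+> S. \<gamma> x \<noteq> 0" "\<forall>i<n. (\<Sum>x\<in>I <+> S. \<gamma> x * V x i) = 0" by blast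
  define \<alpha> where "\<alpha> = (\<lambda>j. \<gamma> (Inl j))"
  define \<beta> where "\<beta> = (\<lambda>j. - \<gamma> (Inr j))"
  have eq: "\<forall>i<n. (\<Sum>j\<in>I. \<alpha> j * v j i) = (\<Sum>j\<in>S. \<beta> j * p j i)"
  proof (intro allI impI)
    fix i assume i: "i < n"
    have "(\<Sum>x\<in>I <+> S. \<gamma> x * V x i) = (\<Sum>j\<in>I. \<alpha> j * v j i) + (\<Sum>j\<in>S. \<gamma> (Inr j) * p j i)"
      using I finS by (simp add: sum.Plus V_def \<alpha>_def)
    moreover have "(\<Sum>j\<in>S. \<beta> j * p j i) = - (\<Sum>j\<in>S. \<gamma> (Inr j) * p j i)"
      unfolding \<beta>_def by (simp add: sum_negf)
    ultimately show "(\<Sum>j\<in>I. \<alpha> j * v j i) = (\<Sum>j\<in>S. \<beta> j * p j i)" using g(2) i by simp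
  qed
  have bnz: "\<exists>j\<in>S. \<beta> j \<noteq> 0" if anz: "\<exists>j\<in>I. \<alpha> j \<noteq> 0"
  proof (rule ccontr)
    assume "\<not> ?thesis"
    hence "\<And>i. i < n \<Longrightarrow> (\<Sum>j\<in>I. \<alpha> j * v j i) = 0" using eq by simp
    from vind[OF this] anz show False by blast
  qed
  have anz: "\<exists>j\<in>I. \<alpha> j \<noteq> 0"
  proof (rule ccontr)
    assume na: "\<not> ?thesis"
    have "\<exists>j\<in>S. \<beta> j \<noteq> 0"
    proof -
      obtain x where x: "x \<in> I <+> S" "\<gamma> x \<noteq> 0" using g(1) by blast
      show ?thesis
      proof (cases x)
        case (Inl j) thus ?thesis using x na unfolding \<alpha>_def by auto
      next
        case (Inr j) thus ?thesis using x unfolding \<beta>_def by auto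
      qed
    qed
    then obtain j0 where j0: "j0 \<in> S" "\<beta> j0 \<noteq> 0" by blast
    from comb_nonzero[OF S j0(1), where c=\<beta>, OF j0(2)] obtain i where i: "i < n" "(\<Sum>j\<in>S. \<beta> j * p j i) \<noteq> 0" by blast
    have "(\<Sum>j\<in>I. \<alpha> j * v j i) = 0" using na by simp
    thus False using eq i by simp
  qed
  show ?thesis using anz bnz[OF anz] eq by blast
qed

lemma cf_ge:
  fixes v :: "'i \<Rightarrow> nat \<Rightarrow> real"
  assumes I: "finite I"
    and vind: "\<And>\<alpha>. (\<And>i. i < n \<Longrightarrow> (\<Sum>j\<in>I. \<alpha> j * v j i) = 0) \<Longrightarrow> \<forall>j\<in>I. \<alpha> j = 0"
    and hyp: "\<And>\<alpha>. qf n a (\<lambda>i. \<Sum>j\<in>I. \<alpha> j * v j i) \<ge> c * ip n (\<lambda>i. \<Sum>j\<in>I. \<alpha> j * v j i) (\<lambda>i. \<Sum>j\<in>I. \<alpha> j * v j i)"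
  shows "card I \<le> card {j. j < n \<and> d j \<ge> c}"
proof (rule ccontr)
  assume neg: "\<not> ?thesis"
  define S where "S = {j. j < n \<and> d j < c}"
  have S: "S \<subseteq> {..<n}" unfolding S_def by auto
  have part: "card S + card {j. j < n \<and> d j \<ge> c} = n"
  proof -
    have "{..<n} = S \<union> {j. j < n \<and> d j \<ge> c}" unfolding S_def by auto
    moreover have "S \<inter> {j. j < n \<and> d j \<ge> c} = {}" unfolding S_def by auto
    ultimately have "card {..<n} = card S + card {j. j < n \<and> d j \<ge> c}"
      by (simp add: card_Un_disjoint S_def)
    thus ?thesis by simp
  qed
  hence "card I + card S > n" using neg by linarith
  from two_fam[OF I vind S this] obtain \<alpha> \<beta> where
    ab: "\<exists>j\<in>I. \<alpha> j \<noteq> 0" "\<exists>j\<in>S. \<beta> j \<noteq> 0" "\<forall>i<n. (\<Sum>j\<in>I. \<alpha> j * v j i) = (\<Sum>j\<in>S. \<beta> j * p j i)"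
    by blast
  let ?w = "\<lambda>i. \<Sum>j\<in>S. \<beta> j * p j i"
  let ?u = "\<lambda>i. \<Sum>j\<in>S. (sqrt ((\<lambda>x. c - x) (d j)) * \<beta> j) * p j i"
  have e: "c * ip n ?w ?w - qf n a ?w = ip n ?u ?u"
    by (rule eig_side_le[OF S]) (auto simp: S_def)
  obtain j0 where j0: "j0 \<in> S" "\<beta> j0 \<noteq> 0" using ab(2) by blast
  have "sqrt (c - d j0) * \<beta> j0 \<noteq> 0" using j0 unfolding S_def by auto
  from comb_nonzero[OF S j0(1), of "\<lambda>j. sqrt ((\<lambda>x. c - x) (d j)) * \<beta> j", OF this]
  obtain i0 where "i0 < n" "?u i0 \<noteq> 0" by auto
  hence "ip n ?u ?u > 0" by (rule ip_self_pos)
  hence "qf n a ?w < c * ip n ?w ?w" using e by linarith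
  moreover have qw: "qf n a (\<lambda>i. \<Sum>j\<in>I. \<alpha> j * v j i) = qf n a ?w" using ab(3) by (intro qf_cong) simp
  moreover have iw: "ip n (\<lambda>i. \<Sum>j\<in>I. \<alpha> j * v j i) (\<lambda>i. \<Sum>j\<in>I. \<alpha> j * v j i) = ip n ?w ?w"
    using ab(3) by (intro ip_cong) simp
  ultimately show False using hyp[of \<alpha>] unfolding qw iw by linarith
qed

lemma cf_lt:
  fixes v :: "'i \<Rightarrow> nat \<Rightarrow> real"
  assumes I: "finite I"
    and vind: "\<And>\<alpha>. (\<And>i. i < n \<Longrightarrow> (\<Sum>j\<in>I. \<alpha> j * v j i) = 0) \<Longrightarrow> \<forall>j\<in>I. \<alpha> j = 0"
    and hyp: "\<And>\<alpha>. (\<exists>j\<in>I. \<alpha> j \<noteq> 0) \<Longrightarrow> qf n a (\<lambda>i. \<Sum>j\<in>I. \<alpha> j * v j i) < c * ip n (\<lambda>i. \<Sum>j\<in>I. \<alpha> j * v j i) (\<lambda>i. \<Sum>j\<in>I. \<alpha> j * v j i)"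
  shows "card I + card {j. j < n \<and> d j \<ge> c} \<le> n"
proof (rule ccontr)
  assume neg: "\<not> ?thesis"
  define S where "S = {j. j < n \<and> d j \<ge> c}"
  have S: "S \<subseteq> {..<n}" unfolding S_def by auto
  have "card I + card S > n" using neg unfolding S_def by linarith
  from two_fam[OF I vind S this] obtain \<alpha> \<beta> where
    ab: "\<exists>j\<in>I. \<alpha> j \<noteq> 0" "\<exists>j\<in>S. \<beta> j \<noteq> 0" "\<forall>i<n. (\<Sum>j\<in>I. \<alpha> j * v j i) = (\<Sum>j\<in>S. \<beta> j * p j i)"
    by blast
  let ?w = "\<lambda>i. \<Sum>j\<in>S. \<beta> j * p j i"
  let ?u = "\<lambda>i. \<Sum>j\<in>S. (sqrt ((\<lambda>x. x - c) (d j)) * \<beta> j) * p j i"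
  have e: "qf n a ?w - c * ip n ?w ?w = ip n ?u ?u"
    by (rule eig_side_ge[OF S]) (auto simp: S_def)
  hence "qf n a ?w \<ge> c * ip n ?w ?w" using ip_self_nonneg[of n ?u] by linarith
  moreover have qw: "qf n a (\<lambda>i. \<Sum>j\<in>I. \<alpha> j * v j i) = qf n a ?w" using ab(3) by (intro qf_cong) simp
  moreover have iw: "ip n (\<lambda>i. \<Sum>j\<in>I. \<alpha> j * v j i) (\<lambda>i. \<Sum>j\<in>I. \<alpha> j * v j i) = ip n ?w ?w"
    using ab(3) by (intro ip_cong) simp
  ultimately show False using hyp[OF ab(1)] unfolding qw iw by linarith
qed

lemma cf_le:
  fixes v :: "'i \<Rightarrow> nat \<Rightarrow> real"
  assumes I: "finite I"
    and vind: "\<And>\<alpha>. (\<And>i. i < n \<Longrightarrow> (\<Sum>j\<in>I. \<alpha> j * v j i) = 0) \<Longrightarrow> \<forall>j\<in>I. \<alpha> j = 0"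
    and hyp: "\<And>\<alpha>. qf n a (\<lambda>i. \<Sum>j\<in>I. \<alpha> j * v j i) \<le> c * ip n (\<lambda>i. \<Sum>j\<in>I. \<alpha> j * v j i) (\<lambda>i. \<Sum>j\<in>I. \<alpha> j * v j i)"
  shows "card I + card {j. j < n \<and> d j > c} \<le> n"
proof (rule ccontr)
  assume neg: "\<not> ?thesis"
  define S where "S = {j. j < n \<and> d j > c}"
  have S: "S \<subseteq> {..<n}" unfolding S_def by auto
  have "card I + card S > n" using neg unfolding S_def by linarith
  from two_fam[OF I vind S this] obtain \<alpha> \<beta> where
    ab: "\<exists>j\<in>I. \<alpha> j \<noteq> 0" "\<exists>j\<in>S. \<beta> j \<noteq> 0" "\<forall>i<n. (\<Sum>j\<in>I. \<alpha> j * v j i) = (\<Sum>j\<in>S. \<beta> j * p j i)"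
    by blast
  let ?w = "\<lambda>i. \<Sum>j\<in>S. \<beta> j * p j i"
  let ?u = "\<lambda>i. \<Sum>j\<in>S. (sqrt ((\<lambda>x. x - c) (d j)) * \<beta> j) * p j i"
  have e: "qf n a ?w - c * ip n ?w ?w = ip n ?u ?u"
    by (rule eig_side_ge[OF S]) (auto simp: S_def)
  obtain j0 where j0: "j0 \<in> S" "\<beta> j0 \<noteq> 0" using ab(2) by blast
  have "sqrt (d j0 - c) * \<beta> j0 \<noteq> 0" using j0 unfolding S_def by auto
  from comb_nonzero[OF S j0(1), of "\<lambda>j. sqrt ((\<lambda>x. x - c) (d j)) * \<beta> j", OF this]
  obtain i0 where "i0 < n" "?u i0 \<noteq> 0" by auto
  hence "ip n ?u ?u > 0" by (rule ip_self_pos)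
  hence "qf n a ?w > c * ip n ?w ?w" using e by linarith
  moreover have qw: "qf n a (\<lambda>i. \<Sum>j\<in>I. \<alpha> j * v j i) = qf n a ?w" using ab(3) by (intro qf_cong) simp
  moreover have iw: "ip n (\<lambda>i. \<Sum>j\<in>I. \<alpha> j * v j i) (\<lambda>i. \<Sum>j\<in>I. \<alpha> j * v j i) = ip n ?w ?w"
    using ab(3) by (intro ip_cong) simp
  ultimately show False using hyp[of \<alpha>] unfolding qw iw by linarith
qed

lemma eig_le_bound:
  assumes hyp: "\<And>x. qf n a x \<le> c * ip n x x" and j: "j < n"
  shows "d j \<le> c"
proof -
  have q: "qf n a (p j) = d j * ip n (p j) (p j)"
    unfolding qf_def ip_def using eig[OF j] by (simp add: sum_distrib_left mult_ac)
  have "\<exists>i<n. (\<Sum>l\<in>{j}. 1 * p l i) \<noteq> 0" by (rule comb_nonzero) (use j in auto)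
  then obtain i0 where "i0 < n" "p j i0 \<noteq> 0" by auto
  hence pos: "ip n (p j) (p j) > 0" by (rule ip_self_pos)
  from hyp[of "p j"] q have "d j * ip n (p j) (p j) \<le> c * ip n (p j) (p j)" by simp
  thus ?thesis using pos by (metis mult_le_cancel_right_pos)
qed

end


lemma card_as_sum: "real (card {k. k < (n::nat) \<and> P k}) = (\<Sum>k<n. if P k then 1 else 0)"
proof -
  have e: "{k. k < n \<and> P k} = {k \<in> {..<n}. P k}" by auto
  have "(\<Sum>k<n. if P k then 1 else (0::real)) = (\<Sum>k\<in>{k \<in> {..<n}. P k}. 1)"
    by (rule sum.inter_filter[symmetric]) simp
  also have "\<dots> = real (card {k \<in> {..<n}. P k})" by simp
  finally show ?thesis unfolding e by simp
qed

lemma lap_qf: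
  assumes symm: "\<And>i j. adj i j = adj j i" and irr: "\<And>i. \<not> adj i i"
  shows "qf n (\<lambda>i j. laplacian n adj $$ (i,j)) x
    = (\<Sum>i<n. \<Sum>j<n. if adj i j then (x i - x j)^2 else 0) / 2"
proof -
  have row: "\<And>i. i < n \<Longrightarrow> (\<Sum>k<n. laplacian n adj $$ (i,k) * x k)
     = (\<Sum>k<n. if adj i k then x i - x k else 0)"
  proof -
    fix i assume i: "i < n"
    have "(\<Sum>k<n. laplacian n adj $$ (i,k) * x k)
        = (\<Sum>k<n. (if i = k then real (card {k. k < n \<and> adj i k}) else 0) * x k + (if adj i k then - x k else 0))"
      using i irr by (intro sum.cong refl) (auto simp: laplacian_def)
    also have "\<dots> = real (card {k. k < n \<and> adj i k}) * x i + (\<Sum>k<n. if adj i k then - x k else 0)"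
      using i by (simp add: sum.distrib if_distrib[of "\<lambda>y. y * x _"] cong: if_cong)
    also have "real (card {k. k < n \<and> adj i k}) * x i = (\<Sum>k<n. if adj i k then x i else 0)"
      unfolding card_as_sum by (simp add: sum_distrib_right if_distrib[of "\<lambda>y. y * x i"] cong: if_cong)
    finally show "(\<Sum>k<n. laplacian n adj $$ (i,k) * x k) = (\<Sum>k<n. if adj i k then x i - x k else 0)"
      by (simp add: sum.distrib[symmetric] if_distrib cong: if_cong)
  qed
  have q: "qf n (\<lambda>i j. laplacian n adj $$ (i,j)) x = (\<Sum>i<n. \<Sum>j<n. if adj i j then x i * x i - x i * x j else 0)"
    unfolding qf_def using row by (simp add: sum_distrib_left if_distrib[of "\<lambda>y. x _ * y"] right_diff_distrib cong: if_cong)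
  have sw: "(\<Sum>i<n. \<Sum>j<n. if adj i j then x j * x j else 0) = (\<Sum>i<n. \<Sum>j<n. if adj i j then x i * x i else 0)"
    by (subst sum.swap) (simp add: symm)
  have "(\<Sum>i<n. \<Sum>j<n. if adj i j then (x i - x j)^2 else 0)
     = (\<Sum>i<n. \<Sum>j<n. (if adj i j then x i * x i - x i * x j else 0) + (if adj i j then x i * x i - x i * x j else 0)
          + ((if adj i j then x j * x j else 0) - (if adj i j then x i * x i else 0)))"
    by (intro sum.cong refl) (auto simp: power2_eq_square algebra_simps)
  also have "\<dots> = 2 * (\<Sum>i<n. \<Sum>j<n. if adj i j then x i * x i - x i * x j else 0)"
    using sw by (simp add: sum.distrib sum_subtractf sum_distrib_left)
  finally show ?thesis using q by simp
qed

lemma qf_le_n: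
  assumes symm: "\<And>i j. adj i j = adj j i" and irr: "\<And>i. \<not> adj i i"
  shows "qf n (\<lambda>i j. laplacian n adj $$ (i,j)) x \<le> real n * ip n x x"
proof -
  have "(\<Sum>i<n. \<Sum>j<n. if adj i j then (x i - x j)^2 else 0) \<le> (\<Sum>i<n. \<Sum>j<n. (x i - x j)^2)"
    by (intro sum_mono) auto
  also have "(\<Sum>i<n. \<Sum>j<n. (x i - x j)^2) = (\<Sum>i<n. \<Sum>j<n. x i * x i + x j * x j - 2 * (x i * x j))"
    by (intro sum.cong refl) (simp add: power2_eq_square algebra_simps)
  also have "\<dots> = (\<Sum>i<n. \<Sum>j<n. x i * x i) + (\<Sum>i<n. \<Sum>j<n. x j * x j) - 2 * (\<Sum>i<n. \<Sum>j<n. x i * x j)"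
    by (simp add: sum.distrib sum_subtractf sum_distrib_left)
  also have "(\<Sum>i<n. \<Sum>j<n. x i * x i) = real n * ip n x x" by (simp add: ip_def sum_distrib_left)
  also have "(\<Sum>i<n. \<Sum>j<n. x j * x j) = real n * ip n x x" by (simp add: ip_def sum_distrib_left)
  also have "(\<Sum>i<n. \<Sum>j<n. x i * x j) = (\<Sum>i<n. x i) * (\<Sum>j<n. x j)" by (simp add: sum_product)
  also have "real n * ip n x x + real n * ip n x x - 2 * ((\<Sum>i<n. x i) * (\<Sum>j<n. x j)) = 2 * real n * ip n x x - 2 * (\<Sum>i<n. x i) * (\<Sum>j<n. x j)"
    by simp
  also have "\<dots> \<le> 2 * real n * ip n x x" by simp
  finally show ?thesis unfolding lap_qf[OF symm irr] by simp
qed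


lemma path_left:
  fixes y :: "nat \<Rightarrow> real"
  shows "(m+2) * (\<Sum>i\<le>r. (y i)^2) - (\<Sum>i<r. (y i - y (Suc i))^2) - m * (y r)^2
       = (m-2) * (\<Sum>i<r. (y i)^2) + 2 * (y 0)^2 + (\<Sum>i<r. (y i + y (Suc i))^2)"
proof (induct r)
  case 0 thus ?case by (simp add: algebra_simps)
next
  case (Suc r)
  have "(m+2) * (\<Sum>i\<le>Suc r. (y i)^2) - (\<Sum>i<Suc r. (y i - y (Suc i))^2) - m * (y (Suc r))^2
     = ((m+2) * (\<Sum>i\<le>r. (y i)^2) - (\<Sum>i<r. (y i - y (Suc i))^2) - m * (y r)^2)
       + ((m+2) * (y (Suc r))^2 - (y r - y (Suc r))^2 - m * (y (Suc r))^2 + m * (y r)^2)"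
    by (simp add: algebra_simps)
  also have "\<dots> = (m-2) * (\<Sum>i<r. (y i)^2) + 2 * (y 0)^2 + (\<Sum>i<r. (y i + y (Suc i))^2)
       + ((m-2) * (y r)^2 + (y r + y (Suc r))^2)"
    unfolding Suc by (simp add: power2_eq_square algebra_simps)
  also have "\<dots> = (m-2) * (\<Sum>i<Suc r. (y i)^2) + 2 * (y 0)^2 + (\<Sum>i<Suc r. (y i + y (Suc i))^2)"
    by (simp add: algebra_simps)
  finally show ?case .
qed

lemma path_right:
  fixes y :: "nat \<Rightarrow> real"
  shows "(m+2) * (\<Sum>i\<in>{lo..lo+r}. (y i)^2) - (\<Sum>i\<in>{lo..<lo+r}. (y i - y (Suc i))^2) - m * (y lo)^2
       = (m-2) * (\<Sum>i\<in>{lo<..lo+r}. (y i)^2) + 2 * (y (lo+r))^2 + (\<Sum>i\<in>{lo..<lo+r}. (y i + y (Suc i))^2)"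
proof (induct r)
  case 0 thus ?case by (simp add: algebra_simps)
next
  case (Suc r)
  have e1: "(\<Sum>i\<in>{lo..lo+Suc r}. (y i)^2) = (\<Sum>i\<in>{lo..lo+r}. (y i)^2) + (y (Suc (lo+r)))^2"
    by simp
  have e2: "(\<Sum>i\<in>{lo..<lo+Suc r}. (y i - y (Suc i))^2) = (\<Sum>i\<in>{lo..<lo+r}. (y i - y (Suc i))^2) + (y (lo+r) - y (Suc (lo+r)))^2"
    by simp
  have "{lo<..lo+Suc r} = insert (Suc (lo+r)) {lo<..lo+r}" by auto
  hence e3: "(\<Sum>i\<in>{lo<..lo+Suc r}. (y i)^2) = (\<Sum>i\<in>{lo<..lo+r}. (y i)^2) + (y (Suc (lo+r)))^2"
    by simp
  have e4: "(\<Sum>i\<in>{lo..<lo+Suc r}. (y i + y (Suc i))^2) = (\<Sum>i\<in>{lo..<lo+r}. (y i + y (Suc i))^2) + (y (lo+r) + y (Suc (lo+r)))^2"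
    by simp
  show ?case unfolding e1 e2 e3 e4 using Suc by (simp add: power2_eq_square algebra_simps)
qed

lemma sq_sum_zero:
  fixes g :: "nat \<Rightarrow> real"
  assumes "finite S" "(\<Sum>i\<in>S. (g i)^2) = 0" "i \<in> S"
  shows "g i = 0"
  using assms sum_nonneg_eq_0_iff[of S "\<lambda>i. (g i)^2"] by auto

lemma path_left_pos:
  fixes y :: "nat \<Rightarrow> real"
  assumes m: "m \<ge> 2" and nz: "j \<le> r" "y j \<noteq> 0"
  shows "(m-2) * (\<Sum>i<r. (y i)^2) + 2 * (y 0)^2 + (\<Sum>i<r. (y i + y (Suc i))^2) > 0"
proof (rule ccontr)
  assume "\<not> ?thesis"
  moreover have "(m-2) * (\<Sum>i<r. (y i)^2) \<ge> 0" using m by (intro mult_nonneg_nonneg sum_nonneg) auto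
  moreover have "(\<Sum>i<r. (y i + y (Suc i))^2) \<ge> 0" by (intro sum_nonneg) auto
  moreover have "2 * (y 0)^2 \<ge> 0" by simp
  ultimately have z0': "(y 0)^2 = 0" and z: "(\<Sum>i<r. (y i + y (Suc i))^2) = 0" by linarith+
  hence z0: "y 0 = 0" by simp
  have "\<forall>i\<le>r. y i = 0"
  proof (intro allI impI)
    fix i assume "i \<le> r"
    thus "y i = 0"
    proof (induct i)
      case 0 show ?case by (rule z0)
    next
      case (Suc i)
      have "y i + y (Suc i) = 0" using sq_sum_zero[OF _ z, of i] Suc by simp
      thus ?case using Suc by simp
    qed
  qed
  thus False using nz by auto
qed

lemma path_right_pos:
  fixes y :: "nat \<Rightarrow> real"
  assumes m: "m \<ge> 2" and nz: "lo \<le> j" "j \<le> lo + r" "y j \<noteq> 0"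
  shows "(m-2) * (\<Sum>i\<in>{lo<..lo+r}. (y i)^2) + 2 * (y (lo+r))^2 + (\<Sum>i\<in>{lo..<lo+r}. (y i + y (Suc i))^2) > 0"
proof (rule ccontr)
  assume "\<not> ?thesis"
  moreover have "(m-2) * (\<Sum>i\<in>{lo<..lo+r}. (y i)^2) \<ge> 0" using m by (intro mult_nonneg_nonneg sum_nonneg) auto
  moreover have "(\<Sum>i\<in>{lo..<lo+r}. (y i + y (Suc i))^2) \<ge> 0" by (intro sum_nonneg) auto
  moreover have "2 * (y (lo+r))^2 \<ge> 0" by simp
  ultimately have z0': "(y (lo+r))^2 = 0" and z: "(\<Sum>i\<in>{lo..<lo+r}. (y i + y (Suc i))^2) = 0" by linarith+
  hence z0: "y (lo+r) = 0" by simp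
  have "\<forall>k\<le>r. y (lo + r - k) = 0"
  proof (intro allI impI)
    fix k assume "k \<le> r"
    thus "y (lo + r - k) = 0"
    proof (induct k)
      case 0 show ?case using z0 by simp
    next
      case (Suc k)
      have i: "lo + r - Suc k \<in> {lo..<lo+r}" using Suc by auto
      have "y (lo + r - Suc k) + y (Suc (lo + r - Suc k)) = 0" using sq_sum_zero[OF _ z i] by simp
      moreover have "Suc (lo + r - Suc k) = lo + r - k" using Suc by simp
      ultimately show ?case using Suc by simp
    qed
  qed
  moreover have "j = lo + r - (lo + r - j)" "lo + r - j \<le> r" using nz by auto
  ultimately show False using nz by metis
qed


lemma sum_S3:
  fixes h :: "nat \<Rightarrow> real"
  assumes t2: "2 \<le> t" and td: "t \<le> d"
  shows "(\<Sum>i\<le>d. if i = t-2 \<or> i = t-1 \<or> i = t then h i else 0) = h (t-2) + h (t-1) + h t"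
proof -
  have "(\<Sum>i\<le>d. if i = t-2 \<or> i = t-1 \<or> i = t then h i else 0) = (\<Sum>i\<in>{i \<in> {..d}. i = t-2 \<or> i = t-1 \<or> i = t}. h i)"
    by (rule sum.inter_filter[symmetric]) simp
  also have "{i \<in> {..d}. i = t-2 \<or> i = t-1 \<or> i = t} = {t-2, t-1, t}" using t2 td by auto
  also have "(\<Sum>i\<in>{t-2, t-1, t}. h i) = h (t-2) + h (t-1) + h t"
  proof -
    have "t - 2 \<noteq> t - 1" "t - 2 \<noteq> t" "t - 1 \<noteq> t" using t2 by auto
    thus ?thesis by simp
  qed
  finally show ?thesis .
qed

lemma sum_lt_d:
  fixes g :: "nat \<Rightarrow> real"
  shows "(\<Sum>i\<le>d. if Suc i \<le> d then g i else 0) = (\<Sum>i<d. g i)"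
proof -
  have "(\<Sum>i\<le>d. if Suc i \<le> d then g i else 0) = (\<Sum>i\<in>{i \<in> {..d}. Suc i \<le> d}. g i)"
    by (rule sum.inter_filter[symmetric]) simp
  also have "{i \<in> {..d}. Suc i \<le> d} = {..<d}" by auto
  finally show ?thesis .
qed

context
  fixes n d t :: nat
  assumes d2: "2 \<le> d" and dn: "d + 2 \<le> n" and t2: "2 \<le> t" and td: "t \<le> d"
begin

lemma Gpp: "i \<le> d \<Longrightarrow> j \<le> d \<Longrightarrow> G_ndt n d t i j = (j = Suc i \<or> i = Suc j)"
  unfolding G_ndt_def using dn by auto

lemma Gpk: "i \<le> d \<Longrightarrow> d < j \<Longrightarrow> j < n \<Longrightarrow> G_ndt n d t i j = (i = t-2 \<or> i = t-1 \<or> i = t)"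
  unfolding G_ndt_def using dn by auto

lemma Gkp: "d < i \<Longrightarrow> i < n \<Longrightarrow> j \<le> d \<Longrightarrow> G_ndt n d t i j = (j = t-2 \<or> j = t-1 \<or> j = t)"
  unfolding G_ndt_def using dn by auto

lemma Gkk: "d < i \<Longrightarrow> i < n \<Longrightarrow> d < j \<Longrightarrow> j < n \<Longrightarrow> G_ndt n d t i j = (i \<noteq> j)"
  unfolding G_ndt_def using dn by auto

lemma G_sym: "G_ndt n d t i j = G_ndt n d t j i"
  unfolding G_ndt_def by auto

lemma G_irr: "\<not> G_ndt n d t i i"
  unfolding G_ndt_def by auto

lemma split_n:
  fixes g :: "nat \<Rightarrow> real"
  shows "(\<Sum>i<n. g i) = (\<Sum>i\<le>d. g i) + (\<Sum>i\<in>{d<..<n}. g i)"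
proof -
  have "{..<n} = {..d} \<union> {d<..<n}" using dn by auto
  moreover have "{..d} \<inter> {d<..<n} = {}" by auto
  ultimately show ?thesis by (simp add: sum.union_disjoint)
qed

lemma G_sum:
  fixes f :: "nat \<Rightarrow> nat \<Rightarrow> real"
  assumes fs: "\<And>i j. f i j = f j i"
  shows "(\<Sum>i<n. \<Sum>j<n. if G_ndt n d t i j then f i j else 0)
    = 2 * (\<Sum>i<d. f i (Suc i)) + 2 * (\<Sum>u\<in>{d<..<n}. f u (t-2) + f u (t-1) + f u t)
      + (\<Sum>u\<in>{d<..<n}. \<Sum>v\<in>{d<..<n}. if u = v then 0 else f u v)"
proof -
  let ?H = "\<lambda>i j. if G_ndt n d t i j then f i j else 0"
  let ?K = "{d<..<n}"
  have "(\<Sum>i<n. \<Sum>j<n. ?H i j) = (\<Sum>i<n. (\<Sum>j\<le>d. ?H i j) + (\<Sum>j\<in>?K. ?H i j))"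
    by (simp add: split_n)
  also have "\<dots> = (\<Sum>i\<le>d. \<Sum>j\<le>d. ?H i j) + (\<Sum>i\<le>d. \<Sum>j\<in>?K. ?H i j)
      + ((\<Sum>i\<in>?K. \<Sum>j\<le>d. ?H i j) + (\<Sum>i\<in>?K. \<Sum>j\<in>?K. ?H i j))"
    by (simp add: split_n sum.distrib)
  also have "(\<Sum>i\<le>d. \<Sum>j\<le>d. ?H i j) = 2 * (\<Sum>i<d. f i (Suc i))"
  proof -
    have "(\<Sum>i\<le>d. \<Sum>j\<le>d. ?H i j) = (\<Sum>i\<le>d. \<Sum>j\<le>d. (if j = Suc i then f i j else 0) + (if i = Suc j then f i j else 0))"
      by (intro sum.cong refl) (auto simp: Gpp)
    also have "\<dots> = (\<Sum>i\<le>d. \<Sum>j\<le>d. if j = Suc i then f i j else 0) + (\<Sum>j\<le>d. \<Sum>i\<le>d. if i = Suc j then f i j else 0)"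
      by (simp add: sum.distrib sum.swap[of _ "{..d}" "{..d}"])
    also have "(\<Sum>i\<le>d. \<Sum>j\<le>d. if j = Suc i then f i j else 0) = (\<Sum>i\<le>d. if Suc i \<le> d then f i (Suc i) else 0)"
      by (intro sum.cong refl) (simp add: sum.delta')
    also have "(\<Sum>j\<le>d. \<Sum>i\<le>d. if i = Suc j then f i j else 0) = (\<Sum>j\<le>d. if Suc j \<le> d then f j (Suc j) else 0)"
      by (intro sum.cong refl) (simp add: sum.delta' fs)
    finally show ?thesis by (simp add: sum_lt_d)
  qed
  also have "(\<Sum>i\<le>d. \<Sum>j\<in>?K. ?H i j) = (\<Sum>u\<in>?K. f u (t-2) + f u (t-1) + f u t)"
  proof -
    have "(\<Sum>i\<le>d. \<Sum>j\<in>?K. ?H i j) = (\<Sum>i\<le>d. if i = t-2 \<or> i = t-1 \<or> i = t then (\<Sum>j\<in>?K. f i j) else 0)"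
      by (intro sum.cong refl) (auto simp: Gpk)
    also have "\<dots> = (\<Sum>j\<in>?K. f (t-2) j) + (\<Sum>j\<in>?K. f (t-1) j) + (\<Sum>j\<in>?K. f t j)"
      by (rule sum_S3[OF t2 td])
    finally show ?thesis by (simp add: sum.distrib fs)
  qed
  also have "(\<Sum>i\<in>?K. \<Sum>j\<le>d. ?H i j) = (\<Sum>u\<in>?K. f u (t-2) + f u (t-1) + f u t)"
  proof (intro sum.cong refl)
    fix u assume u: "u \<in> ?K"
    have "(\<Sum>j\<le>d. ?H u j) = (\<Sum>j\<le>d. if j = t-2 \<or> j = t-1 \<or> j = t then f u j else 0)"
      using u by (intro sum.cong refl) (auto simp: Gkp)
    also have "\<dots> = f u (t-2) + f u (t-1) + f u t" by (rule sum_S3[OF t2 td])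
    finally show "(\<Sum>j\<le>d. ?H u j) = f u (t-2) + f u (t-1) + f u t" .
  qed
  also have "(\<Sum>i\<in>?K. \<Sum>j\<in>?K. ?H i j) = (\<Sum>u\<in>?K. \<Sum>v\<in>?K. if u = v then 0 else f u v)"
    by (intro sum.cong refl) (auto simp: Gkk)
  finally show ?thesis by simp
qed

end


lemma KK_id:
  fixes w :: "nat \<Rightarrow> real"
  shows "(\<Sum>u\<in>K. \<Sum>v\<in>K. (w u - w v)^2) = 2 * real (card K) * (\<Sum>u\<in>K. (w u)^2) - 2 * (\<Sum>u\<in>K. w u)^2"
proof -
  have "(\<Sum>u\<in>K. \<Sum>v\<in>K. (w u - w v)^2) = (\<Sum>u\<in>K. \<Sum>v\<in>K. (w u)^2 + (w v)^2 - 2 * (w u * w v))"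
    by (intro sum.cong refl) (simp add: power2_eq_square algebra_simps)
  also have "\<dots> = (\<Sum>u\<in>K. \<Sum>v\<in>K. (w u)^2) + (\<Sum>u\<in>K. \<Sum>v\<in>K. (w v)^2) - 2 * (\<Sum>u\<in>K. \<Sum>v\<in>K. w u * w v)"
    by (simp add: sum.distrib sum_subtractf sum_distrib_left)
  also have "(\<Sum>u\<in>K. \<Sum>v\<in>K. (w u)^2) = real (card K) * (\<Sum>u\<in>K. (w u)^2)" by (simp add: sum_distrib_left)
  also have "(\<Sum>u\<in>K. \<Sum>v\<in>K. (w v)^2) = real (card K) * (\<Sum>u\<in>K. (w u)^2)" by simp
  also have "(\<Sum>u\<in>K. \<Sum>v\<in>K. w u * w v) = (\<Sum>u\<in>K. w u)^2" by (simp add: sum_product power2_eq_square)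
  finally show ?thesis by simp
qed

lemma KS_id:
  fixes w :: "nat \<Rightarrow> real"
  shows "(\<Sum>u\<in>K. (w u - y1)^2 + (w u - y2)^2 + (w u - y3)^2)
    = 3 * (\<Sum>u\<in>K. (w u)^2) - 2 * (\<Sum>u\<in>K. w u) * (y1 + y2 + y3) + real (card K) * (y1^2 + y2^2 + y3^2)"
proof -
  have "(\<Sum>u\<in>K. (w u - y1)^2 + (w u - y2)^2 + (w u - y3)^2)
     = (\<Sum>u\<in>K. 3 * (w u)^2 - 2 * (y1 + y2 + y3) * w u + (y1^2 + y2^2 + y3^2))"
    by (intro sum.cong refl) (simp add: power2_eq_square algebra_simps)
  also have "\<dots> = 3 * (\<Sum>u\<in>K. (w u)^2) - 2 * (y1 + y2 + y3) * (\<Sum>u\<in>K. w u) + real (card K) * (y1^2 + y2^2 + y3^2)"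
    by (simp add: sum.distrib sum_subtractf sum_distrib_left)
  finally show ?thesis by (simp add: algebra_simps)
qed

context
  fixes n d t :: nat
  assumes d2: "2 \<le> d" and dn: "d + 2 \<le> n" and t2: "2 \<le> t" and td: "t \<le> d"
begin

abbreviation "LL \<equiv> (\<lambda>i j. laplacian n (G_ndt n d t) $$ (i,j))"

lemma cardK: "card {d<..<n} = n - d - 1" by simp

lemma Q_formula:
  "qf n LL w = (\<Sum>i<d. (w i - w (Suc i))^2)
     + (\<Sum>u\<in>{d<..<n}. (w u - w (t-2))^2 + (w u - w (t-1))^2 + (w u - w t)^2)
     + (\<Sum>u\<in>{d<..<n}. \<Sum>v\<in>{d<..<n}. (w u - w v)^2) / 2"
proof -
  have fs: "\<And>i j. (w i - w j)^2 = (w j - w i)^2" by (simp add: power2_commute)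
  have "qf n LL w = (\<Sum>i<n. \<Sum>j<n. if G_ndt n d t i j then (w i - w j)^2 else 0) / 2"
    by (rule lap_qf[OF G_sym[OF d2 dn t2 td] G_irr[OF d2 dn t2 td]])
  also have "(\<Sum>i<n. \<Sum>j<n. if G_ndt n d t i j then (w i - w j)^2 else 0)
    = 2 * (\<Sum>i<d. (w i - w (Suc i))^2) + 2 * (\<Sum>u\<in>{d<..<n}. (w u - w (t-2))^2 + (w u - w (t-1))^2 + (w u - w t)^2)
      + (\<Sum>u\<in>{d<..<n}. \<Sum>v\<in>{d<..<n}. if u = v then 0 else (w u - w v)^2)"
    by (rule G_sum[OF d2 dn t2 td fs])
  also have "(\<Sum>u\<in>{d<..<n}. \<Sum>v\<in>{d<..<n}. if u = v then 0 else (w u - w v)^2) = (\<Sum>u\<in>{d<..<n}. \<Sum>v\<in>{d<..<n}. (w u - w v)^2)"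
    by (intro sum.cong refl) auto
  finally show ?thesis by simp
qed

lemma path_split:
  fixes g :: "nat \<Rightarrow> real"
  shows "(\<Sum>i<d. g i) = (\<Sum>i<t-2. g i) + g (t-2) + g (t-1) + (\<Sum>i\<in>{t..<d}. g i)"
proof -
  have U: "{..<d} = {..<t-2} \<union> {t-2, t-1} \<union> {t..<d}" using t2 td by auto
  have A: "sum g ({..<t-2} \<union> {t-2, t-1} \<union> {t..<d}) = sum g ({..<t-2} \<union> {t-2, t-1}) + sum g {t..<d}"
    by (rule sum.union_disjoint) (use t2 in auto)
  have B: "sum g ({..<t-2} \<union> {t-2, t-1}) = sum g {..<t-2} + sum g {t-2, t-1}"
    by (rule sum.union_disjoint) (use t2 in auto)
  have C: "(\<Sum>i\<in>{t-2, t-1}. g i) = g (t-2) + g (t-1)" using t2 by simp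
  show ?thesis unfolding U A B C by simp
qed

lemma norm_split:
  fixes g :: "nat \<Rightarrow> real"
  shows "(\<Sum>i<n. g i) = (\<Sum>i\<le>t-2. g i) + g (t-1) + (\<Sum>i\<in>{t..d}. g i) + (\<Sum>i\<in>{d<..<n}. g i)"
proof -
  have "{..d} = {..t-2} \<union> {t-1} \<union> {t..d}" using t2 td by auto
  moreover have "{..t-2} \<inter> {t-1} = {}" "({..t-2} \<union> {t-1}) \<inter> {t..d} = {}" using t2 by auto
  ultimately have "(\<Sum>i\<le>d. g i) = (\<Sum>i\<le>t-2. g i) + g (t-1) + (\<Sum>i\<in>{t..d}. g i)"
    by (simp add: sum.union_disjoint)
  thus ?thesis using split_n[OF d2 dn t2 td] by simp
qed

definition PP :: "(nat \<Rightarrow> real) \<Rightarrow> real" where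
  "PP w = (\<Sum>i<t-2. (w i - w (Suc i))^2) + (real (n-d-1) + 1) * (w (t-2))^2
        + (\<Sum>i\<in>{t..<d}. (w i - w (Suc i))^2) + (real (n-d-1) + 1) * (w t)^2"

definition PN :: "(nat \<Rightarrow> real) \<Rightarrow> real" where
  "PN w = (\<Sum>i\<le>t-2. (w i)^2) + (\<Sum>i\<in>{t..d}. (w i)^2)"

lemma Q_center:
  assumes hz: "(\<Sum>u\<in>{d<..<n}. w u) + w (t-1) = 0"
  shows "qf n LL w = PP w + (real (n-d-1) + 3) * ((\<Sum>u\<in>{d<..<n}. (w u)^2) + (w (t-1))^2)"
proof -
  let ?K = "{d<..<n}"
  let ?k = "real (n-d-1)"
  have st: "Suc (t-2) = t-1" "Suc (t-1) = t" using t2 by auto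
  have P: "(\<Sum>i<d. (w i - w (Suc i))^2) = (\<Sum>i<t-2. (w i - w (Suc i))^2) + (w (t-2) - w (t-1))^2
      + (w (t-1) - w t)^2 + (\<Sum>i\<in>{t..<d}. (w i - w (Suc i))^2)"
    using path_split[of "\<lambda>i. (w i - w (Suc i))^2"] st by simp
  have Z: "(\<Sum>u\<in>?K. w u) = - w (t-1)" using hz by simp
  show ?thesis
    unfolding Q_formula P KK_id KS_id cardK PP_def Z
    by (simp add: power2_eq_square algebra_simps diff_divide_distrib)
qed

lemma ip_split:
  "ip n w w = PN w + (w (t-1))^2 + (\<Sum>u\<in>{d<..<n}. (w u)^2)"
  unfolding ip_def PN_def using norm_split[of "\<lambda>i. w i * w i"] by (simp add: power2_eq_square)

lemma PP_le:
  "PP w \<le> (real (n-d-1) + 3) * PN w"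
  "(\<exists>j. (j \<le> t-2 \<or> (t \<le> j \<and> j \<le> d)) \<and> w j \<noteq> 0) \<Longrightarrow> PP w < (real (n-d-1) + 3) * PN w"
proof -
  let ?m = "real (n-d-1) + 1"
  have m2: "?m \<ge> 2" using dn by simp
  have L: "(?m+2) * (\<Sum>i\<le>t-2. (w i)^2) - (\<Sum>i<t-2. (w i - w (Suc i))^2) - ?m * (w (t-2))^2
       = (?m-2) * (\<Sum>i<t-2. (w i)^2) + 2 * (w 0)^2 + (\<Sum>i<t-2. (w i + w (Suc i))^2)"
    by (rule path_left)
  have R0: "(?m+2) * (\<Sum>i\<in>{t..t+(d-t)}. (w i)^2) - (\<Sum>i\<in>{t..<t+(d-t)}. (w i - w (Suc i))^2) - ?m * (w t)^2
       = (?m-2) * (\<Sum>i\<in>{t<..t+(d-t)}. (w i)^2) + 2 * (w (t+(d-t)))^2 + (\<Sum>i\<in>{t..<t+(d-t)}. (w i + w (Suc i))^2)"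
    by (rule path_right)
  have tdt: "t + (d - t) = d" using td by simp
  note R = R0[unfolded tdt]
  have eq: "(real (n-d-1) + 3) * PN w - PP w =
      ((?m-2) * (\<Sum>i<t-2. (w i)^2) + 2 * (w 0)^2 + (\<Sum>i<t-2. (w i + w (Suc i))^2))
    + ((?m-2) * (\<Sum>i\<in>{t<..d}. (w i)^2) + 2 * (w d)^2 + (\<Sum>i\<in>{t..<d}. (w i + w (Suc i))^2))"
    unfolding L[symmetric] R[symmetric] PP_def PN_def by (simp add: algebra_simps)
  have nn1: "(?m-2) * (\<Sum>i<t-2. (w i)^2) + 2 * (w 0)^2 + (\<Sum>i<t-2. (w i + w (Suc i))^2) \<ge> 0"
    using m2 by (intro add_nonneg_nonneg mult_nonneg_nonneg sum_nonneg) auto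
  have nn2: "(?m-2) * (\<Sum>i\<in>{t<..d}. (w i)^2) + 2 * (w d)^2 + (\<Sum>i\<in>{t..<d}. (w i + w (Suc i))^2) \<ge> 0"
    using m2 by (intro add_nonneg_nonneg mult_nonneg_nonneg sum_nonneg) auto
  show "PP w \<le> (real (n-d-1) + 3) * PN w" using eq nn1 nn2 by linarith
  assume "\<exists>j. (j \<le> t-2 \<or> (t \<le> j \<and> j \<le> d)) \<and> w j \<noteq> 0"
  then obtain j where j: "j \<le> t-2 \<or> (t \<le> j \<and> j \<le> d)" "w j \<noteq> 0" by blast
  show "PP w < (real (n-d-1) + 3) * PN w"
  proof (cases "j \<le> t-2")
    case True
    have "(?m-2) * (\<Sum>i<t-2. (w i)^2) + 2 * (w 0)^2 + (\<Sum>i<t-2. (w i + w (Suc i))^2) > 0"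
      by (rule path_left_pos[where y=w, OF m2 True j(2)])
    thus ?thesis using eq nn2 by linarith
  next
    case False
    hence jj: "t \<le> j" "j \<le> t + (d - t)" using j(1) td by auto
    have "(?m-2) * (\<Sum>i\<in>{t<..t+(d-t)}. (w i)^2) + 2 * (w (t+(d-t)))^2 + (\<Sum>i\<in>{t..<t+(d-t)}. (w i + w (Suc i))^2) > 0"
      by (rule path_right_pos[where y=w, OF m2 jj j(2)])
    thus ?thesis using eq nn1 unfolding tdt by linarith
  qed
qed

end


context
  fixes n d t :: nat
  assumes d2: "2 \<le> d" and dn: "d + 2 \<le> n" and t2: "2 \<le> t" and td: "t \<le> d"
begin

lemma Q_lower:
  assumes y1: "w (t-2) = - h" and y2: "w t = - h"
    and hz: "(\<Sum>u\<in>{d<..<n}. w u) + w (t-1) = 2 * h"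
    and z: "\<And>i. i \<le> d \<Longrightarrow> i \<noteq> t-2 \<Longrightarrow> i \<noteq> t-1 \<Longrightarrow> i \<noteq> t \<Longrightarrow> w i = 0"
  shows "qf n (LL n d t) w \<ge> (real (n-d-1) + 3) * ip n w w"
proof -
  let ?K = "{d<..<n}"
  have st: "Suc (t-2) = t-1" "Suc (t-1) = t" using t2 by auto
  have P: "(\<Sum>i<d. (w i - w (Suc i))^2) = (\<Sum>i<t-2. (w i - w (Suc i))^2) + (w (t-2) - w (t-1))^2
      + (w (t-1) - w t)^2 + (\<Sum>i\<in>{t..<d}. (w i - w (Suc i))^2)"
    using path_split[OF d2 dn t2 td, of "\<lambda>i. (w i - w (Suc i))^2"] st by simp
  have P1: "(\<Sum>i<t-2. (w i - w (Suc i))^2) \<ge> 0" "(\<Sum>i\<in>{t..<d}. (w i - w (Suc i))^2) \<ge> 0"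
    by (intro sum_nonneg, simp)+
  have PN1: "(\<Sum>i\<le>t-2. (w i)^2) = (w (t-2))^2"
  proof -
    have "(\<Sum>i\<le>t-2. (w i)^2) = (\<Sum>i\<in>{t-2}. (w i)^2)"
      using td by (intro sum.mono_neutral_cong_right) (auto intro: z)
    thus ?thesis by simp
  qed
  have PN2: "(\<Sum>i\<in>{t..d}. (w i)^2) = (w t)^2"
  proof -
    have "(\<Sum>i\<in>{t..d}. (w i)^2) = (\<Sum>i\<in>{t}. (w i)^2)"
    proof (intro sum.mono_neutral_cong_right)
      show "\<forall>i\<in>{t..d} - {t}. (w i)^2 = 0"
      proof
        fix i assume i: "i \<in> {t..d} - {t}"
        hence "i \<le> d" "i \<noteq> t-2" "i \<noteq> t-1" "i \<noteq> t" using t2 by auto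
        thus "(w i)^2 = 0" using z by simp
      qed
    qed (use td in auto)
    thus ?thesis by simp
  qed
  have Z: "(\<Sum>u\<in>?K. w u) = 2 * h - w (t-1)" using hz by simp
  have ge: "qf n (LL n d t) w \<ge> (w (t-2) - w (t-1))^2 + (w (t-1) - w t)^2
     + (\<Sum>u\<in>?K. (w u - w (t-2))^2 + (w u - w (t-1))^2 + (w u - w t)^2)
     + (\<Sum>u\<in>?K. \<Sum>v\<in>?K. (w u - w v)^2) / 2"
    unfolding Q_formula[OF d2 dn t2 td] P using P1 by linarith
  define W where "W = (\<Sum>u\<in>?K. (w u)^2)"
  define k where "k = real (n-d-1)"
  define wc where "wc = w (t-1)"
  have wc': "w (t - Suc 0) = wc" by (simp add: wc_def)
  have KK: "(\<Sum>u\<in>?K. \<Sum>v\<in>?K. (w u - w v)^2) = 2 * k * W - 2 * (2 * h - wc)^2"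
    unfolding KK_id cardK Z W_def k_def wc_def by simp
  have KS: "(\<Sum>u\<in>?K. (w u - w (t-2))^2 + (w u - w (t-1))^2 + (w u - w t)^2)
     = 3 * W - 2 * (2 * h - wc) * (- h + wc - h) + k * (h^2 + wc^2 + h^2)"
    unfolding KS_id cardK Z W_def k_def wc_def y1 y2 by simp
  have IP: "ip n w w = 2 * h^2 + wc^2 + W"
    unfolding ip_split[OF d2 dn t2 td] PN_def[OF d2 dn t2 td] PN1 PN2 y1 y2 W_def wc_def by simp
  have "(w (t-2) - w (t-1))^2 + (w (t-1) - w t)^2
     + (\<Sum>u\<in>?K. (w u - w (t-2))^2 + (w u - w (t-1))^2 + (w u - w t)^2)
     + (\<Sum>u\<in>?K. \<Sum>v\<in>?K. (w u - w v)^2) / 2 = (k + 3) * ip n w w"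
    unfolding KK KS IP
    by (simp add: y1 y2 wc' power2_eq_square algebra_simps diff_divide_distrib add_divide_distrib)
  hence "(w (t-2) - w (t-1))^2 + (w (t-1) - w t)^2
     + (\<Sum>u\<in>?K. (w u - w (t-2))^2 + (w u - w (t-1))^2 + (w u - w t)^2)
     + (\<Sum>u\<in>?K. \<Sum>v\<in>?K. (w u - w v)^2) / 2 = (real (n-d-1) + 3) * ip n w w"
    unfolding k_def .
  thus ?thesis using ge by simp
qed

end


lemma comb_unit:
  fixes \<alpha> :: "nat \<Rightarrow> real"
  assumes "finite I"
  shows "(\<Sum>j\<in>I. \<alpha> j * (if i = j then 1 else 0)) = (if i \<in> I then \<alpha> i else 0)"
proof -
  have "(\<Sum>j\<in>I. \<alpha> j * (if i = j then 1 else 0)) = (\<Sum>j\<in>I. if i = j then \<alpha> j else 0)"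
    by (intro sum.cong refl) auto
  also have "\<dots> = (if i \<in> I then \<alpha> i else 0)" using assms by (simp add: sum.delta)
  finally show ?thesis .
qed

context
  fixes n d t :: nat
  assumes d2: "2 \<le> d" and dn: "d + 2 \<le> n" and t2: "2 \<le> t" and td: "t \<le> d"
begin

abbreviation "I2 \<equiv> {..d} - {t-1}"
definition v2 :: "nat \<Rightarrow> nat \<Rightarrow> real" where "v2 j i = (if i = j then 1 else 0)"

lemma card_I2: "card I2 = d"
  using t2 td by (simp add: card_Diff_singleton)

lemma ind2: "(\<And>i. i < n \<Longrightarrow> (\<Sum>j\<in>I2. \<alpha> j * v2 j i) = 0) \<Longrightarrow> \<forall>j\<in>I2. \<alpha> j = 0"
proof
  fix j assume h: "\<And>i. i < n \<Longrightarrow> (\<Sum>j\<in>I2. \<alpha> j * v2 j i) = 0" and j: "j \<in> I2"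
  have f: "finite I2" by simp
  have "j < n" using j dn by auto
  from h[OF this] show "\<alpha> j = 0" using j unfolding v2_def comb_unit[OF f] by simp
qed

lemma hyp2:
  assumes nz: "\<exists>j\<in>I2. \<alpha> j \<noteq> 0"
  shows "qf n (LL n d t) (\<lambda>i. \<Sum>j\<in>I2. \<alpha> j * v2 j i)
    < (real (n-d-1) + 3) * ip n (\<lambda>i. \<Sum>j\<in>I2. \<alpha> j * v2 j i) (\<lambda>i. \<Sum>j\<in>I2. \<alpha> j * v2 j i)"
proof -
  define w where "w = (\<lambda>i. if i \<in> I2 then \<alpha> i else (0::real))"
  have f: "finite I2" by simp
  have we: "(\<lambda>i. \<Sum>j\<in>I2. \<alpha> j * v2 j i) = w" unfolding w_def v2_def comb_unit[OF f] by simp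
  have wK: "\<And>u. u \<in> {d<..<n} \<Longrightarrow> w u = 0" unfolding w_def by auto
  have wc: "w (t-1) = 0" unfolding w_def by simp
  have hz: "(\<Sum>u\<in>{d<..<n}. w u) + w (t-1) = 0" using wK wc by simp
  have W0: "(\<Sum>u\<in>{d<..<n}. (w u)^2) = 0" using wK by simp
  obtain j where j: "j \<in> I2" "\<alpha> j \<noteq> 0" using nz by blast
  have "(j \<le> t-2 \<or> (t \<le> j \<and> j \<le> d)) \<and> w j \<noteq> 0" using j t2 unfolding w_def by auto
  hence "PP n d t w < (real (n-d-1) + 3) * PN d t w" using PP_le(2)[OF d2 dn t2 td] by blast
  thus ?thesis unfolding we Q_center[OF d2 dn t2 td hz] ip_split[OF d2 dn t2 td] W0 wc by simp
qed

abbreviation "I3 \<equiv> ({..d} - {t-1}) \<union> {d<..<n}"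
definition v3 :: "nat \<Rightarrow> nat \<Rightarrow> real" where
  "v3 j i = (if i = j then 1 else 0) - (if j \<in> {d<..<n} \<and> i = t-1 then 1 else 0)"

lemma card_I3: "card I3 = n - 1"
proof -
  have "card I3 = card ({..d} - {t-1}) + card {d<..<n}" by (rule card_Un_disjoint) auto
  thus ?thesis using card_I2 dn by simp
qed

lemma comb3: "(\<Sum>j\<in>I3. \<alpha> j * v3 j i) = (if i \<in> I3 then \<alpha> i else 0) - (if i = t-1 then (\<Sum>u\<in>{d<..<n}. \<alpha> u) else 0)"
proof -
  have "(\<Sum>j\<in>I3. \<alpha> j * v3 j i) = (\<Sum>j\<in>I3. \<alpha> j * (if i = j then 1 else 0)) - (\<Sum>j\<in>I3. if j \<in> {d<..<n} \<and> i = t-1 then \<alpha> j else 0)"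
    unfolding v3_def by (simp add: right_diff_distrib sum_subtractf if_distrib[of "\<lambda>x. \<alpha> _ * x"] cong: if_cong)
  also have "(\<Sum>j\<in>I3. \<alpha> j * (if i = j then 1 else 0)) = (if i \<in> I3 then \<alpha> i else 0)" by (rule comb_unit) simp
  also have "(\<Sum>j\<in>I3. if j \<in> {d<..<n} \<and> i = t-1 then \<alpha> j else 0) = (if i = t-1 then (\<Sum>u\<in>{d<..<n}. \<alpha> u) else 0)"
  proof (cases "i = t-1")
    case True
    have "(\<Sum>j\<in>I3. if j \<in> {d<..<n} then \<alpha> j else 0) = (\<Sum>j\<in>{j \<in> I3. j \<in> {d<..<n}}. \<alpha> j)"
      by (rule sum.inter_filter[symmetric]) simp
    also have "{j \<in> I3. j \<in> {d<..<n}} = {d<..<n}" by auto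
    finally have "(\<Sum>j\<in>I3. if j \<in> {d<..<n} then \<alpha> j else 0) = (\<Sum>j\<in>{d<..<n}. \<alpha> j)" .
    thus ?thesis using True by simp
  qed simp
  finally show ?thesis .
qed

lemma ind3: "(\<And>i. i < n \<Longrightarrow> (\<Sum>j\<in>I3. \<alpha> j * v3 j i) = 0) \<Longrightarrow> \<forall>j\<in>I3. \<alpha> j = 0"
proof
  fix j assume h: "\<And>i. i < n \<Longrightarrow> (\<Sum>j\<in>I3. \<alpha> j * v3 j i) = 0" and j: "j \<in> I3"
  have jn: "j < n" "j \<noteq> t-1" using j dn td t2 by auto
  from h[OF jn(1)] show "\<alpha> j = 0" using j jn(2) unfolding comb3 by simp
qed

lemma hyp3:
  "qf n (LL n d t) (\<lambda>i. \<Sum>j\<in>I3. \<alpha> j * v3 j i)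
    \<le> (real (n-d-1) + 3) * ip n (\<lambda>i. \<Sum>j\<in>I3. \<alpha> j * v3 j i) (\<lambda>i. \<Sum>j\<in>I3. \<alpha> j * v3 j i)"
proof -
  define w where "w = (\<lambda>i. \<Sum>j\<in>I3. \<alpha> j * v3 j i)"
  have tl: "\<not> d < t - 1" "t - 1 \<le> d" using td by auto
  have wK: "\<And>u. u \<in> {d<..<n} \<Longrightarrow> w u = \<alpha> u"
  proof -
    fix u assume u: "u \<in> {d<..<n}"
    hence "u \<noteq> t-1" "u \<in> I3" using tl by auto
    thus "w u = \<alpha> u" unfolding w_def comb3 by simp
  qed
  have wc: "w (t-1) = - (\<Sum>u\<in>{d<..<n}. \<alpha> u)" unfolding w_def comb3 using tl by simp
  have hz: "(\<Sum>u\<in>{d<..<n}. w u) + w (t-1) = 0" using wK wc by simp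
  have "PP n d t w \<le> (real (n-d-1) + 3) * PN d t w" by (rule PP_le(1)[OF d2 dn t2 td])
  hence "qf n (LL n d t) w \<le> (real (n-d-1) + 3) * ip n w w"
    unfolding Q_center[OF d2 dn t2 td hz] ip_split[OF d2 dn t2 td] by (simp add: algebra_simps)
  thus ?thesis unfolding w_def .
qed

abbreviation "I1 \<equiv> insert (t-1) {d<..<n}"
definition x1 :: "nat \<Rightarrow> real" where
  "x1 i = (if (d < i \<and> i < n) \<or> i = t-1 then 1 else if i = t-2 \<or> i = t then - ((real (n-d-1) + 1) / 2) else 0)"
definition v1 :: "nat \<Rightarrow> nat \<Rightarrow> real" where
  "v1 j i = (if j = t-1 then x1 i else (if i = j then 1 else 0) - (if i = t-1 then 1 else 0))"

lemma card_I1: "card I1 = n - d"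
  using td dn by simp

lemma comb1: "(\<Sum>j\<in>I1. \<alpha> j * v1 j i) = \<alpha> (t-1) * x1 i + (if i \<in> {d<..<n} then \<alpha> i else 0) - (if i = t-1 then (\<Sum>u\<in>{d<..<n}. \<alpha> u) else 0)"
proof -
  have nin: "t-1 \<notin> {d<..<n}" using td by auto
  have "(\<Sum>j\<in>I1. \<alpha> j * v1 j i) = \<alpha> (t-1) * v1 (t-1) i + (\<Sum>j\<in>{d<..<n}. \<alpha> j * v1 j i)"
    by (rule sum.insert[OF finite_greaterThanLessThan nin])
  also have "v1 (t-1) i = x1 i" by (simp add: v1_def)
  also have "(\<Sum>j\<in>{d<..<n}. \<alpha> j * v1 j i) = (\<Sum>j\<in>{d<..<n}. \<alpha> j * ((if i = j then 1 else 0) - (if i = t-1 then 1 else 0)))"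
    by (intro sum.cong refl) (use nin in \<open>auto simp: v1_def\<close>)
  also have "\<dots> = (\<Sum>j\<in>{d<..<n}. \<alpha> j * (if i = j then 1 else 0)) - (\<Sum>j\<in>{d<..<n}. \<alpha> j * (if i = t-1 then 1 else 0))"
    by (simp only: right_diff_distrib sum_subtractf)
  also have "(\<Sum>j\<in>{d<..<n}. \<alpha> j * (if i = j then 1 else 0)) = (if i \<in> {d<..<n} then \<alpha> i else 0)" by (rule comb_unit) simp
  also have "(\<Sum>j\<in>{d<..<n}. \<alpha> j * (if i = t-1 then 1 else 0)) = (if i = t-1 then (\<Sum>u\<in>{d<..<n}. \<alpha> u) else 0)" by simp
  finally show ?thesis by simp
qed

lemma ind1: "(\<And>i. i < n \<Longrightarrow> (\<Sum>j\<in>I1. \<alpha> j * v1 j i) = 0) \<Longrightarrow> \<forall>j\<in>I1. \<alpha> j = 0"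
proof -
  assume h: "\<And>i. i < n \<Longrightarrow> (\<Sum>j\<in>I1. \<alpha> j * v1 j i) = 0"
  have a: "t-2 < n" "t-2 \<notin> {d<..<n}" "t-2 \<noteq> t-1" using td dn t2 by auto
  have x: "x1 (t-2) = - ((real (n-d-1) + 1) / 2)" unfolding x1_def using a td by auto
  from h[OF a(1)] have "\<alpha> (t-1) * x1 (t-2) = 0" unfolding comb1 using a by simp
  hence s0: "\<alpha> (t-1) = 0" unfolding x by simp
  have "\<forall>u\<in>{d<..<n}. \<alpha> u = 0"
  proof
    fix u assume u: "u \<in> {d<..<n}"
    hence "u < n" "u \<noteq> t-1" using td by auto
    from h[OF this(1)] show "\<alpha> u = 0" unfolding comb1 s0 using u \<open>u \<noteq> t-1\<close> by simp
  qed
  thus ?thesis using s0 by simp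
qed

lemma hyp1:
  "qf n (LL n d t) (\<lambda>i. \<Sum>j\<in>I1. \<alpha> j * v1 j i)
    \<ge> (real (n-d-1) + 3) * ip n (\<lambda>i. \<Sum>j\<in>I1. \<alpha> j * v1 j i) (\<lambda>i. \<Sum>j\<in>I1. \<alpha> j * v1 j i)"
proof (rule Q_lower[OF d2 dn t2 td])
  let ?w = "\<lambda>i. \<Sum>j\<in>I1. \<alpha> j * v1 j i"
  let ?s = "\<alpha> (t-1)"
  let ?h = "?s * (real (n-d-1) + 1) / 2"
  have a: "t-2 \<notin> {d<..<n}" "t-2 \<noteq> t-1" "t \<notin> {d<..<n}" "t \<noteq> t-1" "\<not> (d < t-2)" "\<not> (d < t)" using td dn t2 by auto
  show "?w (t-2) = - ?h" unfolding comb1 x1_def using a by simp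
  show "?w t = - ?h" unfolding comb1 x1_def using a by simp
  have wK: "\<And>u. u \<in> {d<..<n} \<Longrightarrow> ?w u = ?s + \<alpha> u"
    unfolding comb1 x1_def using td by auto
  have "(\<Sum>u\<in>{d<..<n}. ?w u) = (\<Sum>u\<in>{d<..<n}. ?s + \<alpha> u)" using wK by simp
  also have "\<dots> = real (n-d-1) * ?s + (\<Sum>u\<in>{d<..<n}. \<alpha> u)" by (simp add: sum.distrib)
  finally have sK: "(\<Sum>u\<in>{d<..<n}. ?w u) = real (n-d-1) * ?s + (\<Sum>u\<in>{d<..<n}. \<alpha> u)" .
  have wc: "?w (t-1) = ?s - (\<Sum>u\<in>{d<..<n}. \<alpha> u)" unfolding comb1 x1_def using td by auto
  show "(\<Sum>u\<in>{d<..<n}. ?w u) + ?w (t-1) = 2 * ?h" unfolding sK wc by (simp add: algebra_simps)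
  show "\<And>i. i \<le> d \<Longrightarrow> i \<noteq> t-2 \<Longrightarrow> i \<noteq> t-1 \<Longrightarrow> i \<noteq> t \<Longrightarrow> ?w i = 0"
    unfolding comb1 x1_def by auto
qed

end


lemma filter_sort_length: "length (filter P (sort xs)) = length (filter P xs)"
  by (metis mset_filter mset_sort size_mset)

lemma sorted_kth:
  fixes xs :: "real list"
  assumes ge: "card {i. i < length xs \<and> xs!i \<ge> a} = m"
    and gt: "card {i. i < length xs \<and> xs!i > a} < m"
    and m1: "1 \<le> m" and mN: "m \<le> length xs"
  shows "rev (sort xs) ! (m-1) = a"
proof -
  define zs where "zs = sort xs"
  define N where "N = length xs"
  have lz: "length zs = N" unfolding zs_def N_def by simp
  have sz: "sorted zs" unfolding zs_def by simp
  have tr: "\<And>Q. card {i. i < N \<and> Q (zs!i)} = card {i. i < length xs \<and> Q (xs!i)}"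
  proof -
    fix Q :: "real \<Rightarrow> bool"
    have "card {i. i < N \<and> Q (zs!i)} = length (filter Q zs)"
      unfolding length_filter_conv_card lz ..
    also have "\<dots> = length (filter Q xs)" unfolding zs_def by (rule filter_sort_length)
    also have "\<dots> = card {i. i < length xs \<and> Q (xs!i)}" by (rule length_filter_conv_card)
    finally show "card {i. i < N \<and> Q (zs!i)} = card {i. i < length xs \<and> Q (xs!i)}" .
  qed
  have ge': "card {i. i < N \<and> zs!i \<ge> a} = m" using tr[of "\<lambda>x. x \<ge> a"] ge by simp
  have gt': "card {i. i < N \<and> zs!i > a} < m" using tr[of "\<lambda>x. x > a"] gt by simp
  define r where "r = N - m"
  have rN: "r < N" using m1 mN unfolding r_def N_def by simp
  have "rev zs ! (m-1) = zs ! (N - Suc (m-1))" using m1 mN lz unfolding N_def by (simp add: rev_nth)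
  also have "N - Suc (m-1) = r" using m1 unfolding r_def by simp
  finally have rv: "rev zs ! (m-1) = zs ! r" .
  have i: "zs ! r \<ge> a"
  proof (rule ccontr)
    assume "\<not> ?thesis"
    hence lt: "zs ! r < a" by simp
    have "{i. i < N \<and> zs!i \<ge> a} \<subseteq> {r<..<N}"
    proof
      fix i assume "i \<in> {i. i < N \<and> zs!i \<ge> a}"
      hence i: "i < N" "zs!i \<ge> a" by auto
      have "r < i"
      proof (rule ccontr)
        assume "\<not> r < i"
        hence "zs!i \<le> zs!r" using sz rN lz by (simp add: sorted_nth_mono)
        thus False using i lt by simp
      qed
      thus "i \<in> {r<..<N}" using i by simp
    qed
    hence "card {i. i < N \<and> zs!i \<ge> a} \<le> card {r<..<N}" by (intro card_mono) auto
    also have "card {r<..<N} = N - Suc r" by simp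
    finally show False using ge' m1 mN unfolding r_def N_def by simp
  qed
  have ii: "zs ! r \<le> a"
  proof (rule ccontr)
    assume "\<not> ?thesis"
    hence lt: "zs ! r > a" by simp
    have "{r..<N} \<subseteq> {i. i < N \<and> zs!i > a}"
    proof
      fix i assume "i \<in> {r..<N}"
      hence i: "r \<le> i" "i < N" by auto
      hence "zs!r \<le> zs!i" using sz lz by (simp add: sorted_nth_mono)
      thus "i \<in> {i. i < N \<and> zs!i > a}" using i lt by simp
    qed
    hence "card {r..<N} \<le> card {i. i < N \<and> zs!i > a}" by (intro card_mono) auto
    hence "N - r \<le> card {i. i < N \<and> zs!i > a}" by simp
    thus False using gt' mN unfolding r_def N_def by simp
  qed
  show ?thesis using rv i ii unfolding zs_def by simp
qed

lemma proots_lin: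
  fixes dd :: "nat \<Rightarrow> real"
  shows "proots (\<Prod>j<n. [:- dd j, 1:]) = mset (map dd [0..<n])"
proof (induct n)
  case 0 thus ?case by simp
next
  case (Suc n)
  have nz: "(\<Prod>j<n. [:- dd j, (1::real):]) \<noteq> 0" by (simp add: prod_zero_iff)
  have "proots (\<Prod>j<Suc n. [:- dd j, 1:]) = proots ((\<Prod>j<n. [:- dd j, 1:]) * [:- dd n, 1:])" by simp
  also have "\<dots> = proots (\<Prod>j<n. [:- dd j, 1:]) + proots [:- dd n, 1:]" by (rule proots_mult) (use nz in auto)
  also have "\<dots> = mset (map dd [0..<n]) + {# dd n #}" using Suc by (simp add: proots_linear_factor)
  finally show ?case by simp
qed

theorem lemma2p6:
  fixes n d t :: nat
  assumes "2 \<le> d" and "d + 2 \<le> n" and "2 \<le> t" and "t \<le> d"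
  shows "lap_count n (G_ndt n d t) {real n - real d + 2 .. real n} = n - d
    \<and> lap_mu n (G_ndt n d t) (n - d) = real n - real d + 2"
proof -
  note as = assms
  let ?G = "G_ndt n d t"
  let ?L = "laplacian n ?G"
  have L: "?L \<in> carrier_mat n n" by (simp add: laplacian_def)
  have symL: "\<And>i j. i < n \<Longrightarrow> j < n \<Longrightarrow> ?L $$ (i,j) = ?L $$ (j,i)"
    using G_sym[OF as] by (auto simp: laplacian_def)
  obtain P dd where eig: "\<forall>i<n. \<forall>j<n. (\<Sum>k<n. ?L$$(i,k) * P$$(k,j)) = dd j * P$$(i,j)"
    and ind: "\<forall>\<gamma>. (\<forall>i<n. (\<Sum>j<n. \<gamma> j * P$$(i,j)) = 0) \<longrightarrow> (\<forall>j<n. \<gamma> j = 0)"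
    and cp: "char_poly ?L = (\<Prod>j<n. [:- dd j, 1:])"
    using sym_spectral[OF L symL] by blast
  interpret S: symeig n "\<lambda>i j. ?L $$ (i,j)" "\<lambda>j i. P $$ (i,j)" dd
  proof
    show "\<And>i j. i < n \<Longrightarrow> j < n \<Longrightarrow> ?L $$ (i,j) = ?L $$ (j,i)" by (rule symL)
    show "\<And>j i. j < n \<Longrightarrow> i < n \<Longrightarrow> (\<Sum>k<n. ?L $$ (i,k) * P $$ (k,j)) = dd j * P $$ (i,j)" using eig by blast
    show "\<And>\<gamma> j. (\<And>i. i < n \<Longrightarrow> (\<Sum>j<n. \<gamma> j * P $$ (i,j)) = 0) \<Longrightarrow> j < n \<Longrightarrow> \<gamma> j = 0" using ind by blast
  qed
  define a where "a = real (n-d-1) + 3"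
  have aeq: "a = real n - real d + 2" unfolding a_def using as by (simp add: of_nat_diff)
  have c1: "card (I1 n d t) \<le> card {j. j < n \<and> dd j \<ge> a}"
    unfolding a_def by (rule S.cf_ge[OF _ ind1[OF as] hyp1[OF as]]) simp
  have c2: "card (I2 d t) + card {j. j < n \<and> dd j \<ge> a} \<le> n"
    unfolding a_def by (rule S.cf_lt[OF _ ind2[OF as] hyp2[OF as]]) simp
  have c3: "card (I3 n d t) + card {j. j < n \<and> dd j > a} \<le> n"
    unfolding a_def by (rule S.cf_le[OF _ ind3[OF as] hyp3[OF as]]) simp
  have c4: "\<And>j. j < n \<Longrightarrow> dd j \<le> real n"
    by (rule S.eig_le_bound[OF qf_le_n[OF G_sym[OF as] G_irr[OF as]]])
  have cge: "card {j. j < n \<and> dd j \<ge> a} = n - d"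
    using c1 c2 card_I1[OF as] card_I2[OF as] by simp
  have cgt: "card {j. j < n \<and> dd j > a} \<le> 1"
    using c3 card_I3[OF as] as by simp
  define xs where "xs = map dd [0..<n]"
  have eigs: "lap_eigs n ?G = mset xs" unfolding lap_eigs_def cp xs_def by (rule proots_lin)
  have lx: "length xs = n" unfolding xs_def by simp
  have xsi: "\<And>i. i < n \<Longrightarrow> xs ! i = dd i" unfolding xs_def by simp
  have cnt: "\<And>Q. card {i. i < length xs \<and> Q (xs ! i)} = card {j. j < n \<and> Q (dd j)}"
    unfolding lx by (intro arg_cong[where f=card]) (auto simp: xsi)
  have part1: "lap_count n ?G {real n - real d + 2 .. real n} = n - d"
  proof -
    have "lap_count n ?G {a .. real n} = length (filter (\<lambda>x. x \<in> {a .. real n}) xs)"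
      unfolding lap_count_def eigs by (metis mset_filter size_mset)
    also have "\<dots> = card {i. i < length xs \<and> xs ! i \<in> {a .. real n}}" by (rule length_filter_conv_card)
    also have "\<dots> = card {j. j < n \<and> dd j \<in> {a .. real n}}" by (rule cnt)
    also have "{j. j < n \<and> dd j \<in> {a .. real n}} = {j. j < n \<and> dd j \<ge> a}" using c4 by auto
    finally show ?thesis using cge aeq by simp
  qed
  have part2: "lap_mu n ?G (n - d) = real n - real d + 2"
  proof -
    have "lap_mu n ?G (n - d) = rev (sort xs) ! (n - d - 1)"
      unfolding lap_mu_def eigs by simp
    also have "\<dots> = a"
    proof (rule sorted_kth)
      show "card {i. i < length xs \<and> xs!i \<ge> a} = n - d" using cnt[of "\<lambda>x. x \<ge> a"] cge by simp
      show "card {i. i < length xs \<and> xs!i > a} < n - d" using cnt[of "\<lambda>x. x > a"] cgt as by simp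
      show "1 \<le> n - d" using as by simp
      show "n - d \<le> length xs" using lx by simp
    qed
    finally show ?thesis using aeq by simp
  qed
  show ?thesis using part1 part2 by simp
qed


end
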